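(* Let $T$ be a c.n.u. contraction on $H$ and let $(H_+,H_-,\Gamma_+,\Gamma_-)$ be a boundary quadruple for $A_T^{\perp_s}$ with contractive Weyl function $B$. For $s,t\in\mathfrak{H}$, one has $(s,t)\in\widehat{A_T^{\perp_s}}$ if and only if there exist $x_\pm\in H_\pm$ such that $\lambda f_s(\lambda)-f_t(\lambda)=B(\lambda)x_+-x_-$ for all $\lambda\in\mathbb{D}_+$ and $f_s(\lambda)-\lambda f_t(\lambda)=x_+-B(\bar\lambda)^*x_-$ for all $\lambda\in\mathbb{D}_-$.
   Context: $H$ is an infinite-dimensional separable complex Hilbert space with inner product $(\cdot,\cdot)_H$; $T\in\mathbb{B}(H)$, $\|T\|\le1$, is completely non-unitary. $\mathbb{K}=\ker(I-T^*T)$. $\mathbb{H}=H\oplus_\perp H$ with $[(x_1,x_2),(y_1,y_2)]=i(x_1,y_1)_H-i(x_2,y_2)_H$; $S^{\perp_s}=\{a:[a,b]=0\ \forall b\in S\}$; $A_T=\{(x,Tx):x\in\mathbb{K}\}$. $\mathbb{D}_\pm$ are two copies of the open unit disc; for $\lambda\in\mathbb{D}_\pm$, $\bar\lambda$ is regarded as a point of $\mathbb{D}_\mp$. $N_\lambda=\{(x,\lambda x)\}\cap A_T^{\perp_s}$ ($\lambda\in\mathbb{D}_+$), $N_\lambda=\{(\lambda x,x)\}\cap A_T^{\perp_s}$ ($\lambda\in\mathbb{D}_-$). Boundary quadruple: Hilbert spaces $H_\pm$, linear $\Gamma_\pm:A_T^{\perp_s}\to H_\pm$ with $(\Gamma_+,\Gamma_-)$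 bounded, onto $H_+\oplus_\perp H_-$, kernel $A_T$, and $[a,b]=i(\Gamma_+a,\Gamma_+b)-i(\Gamma_-a,\Gamma_-b)$. Contractive Weyl function $B$: for $\lambda\in\mathbb{D}_+$, $\Gamma_+|_{N_\lambda}$ bijective onto $H_+$, $\Gamma_-a=B(\lambda)\Gamma_+a$ on $N_\lambda$, $\|B(\lambda)\|<1$; for $\lambda\in\mathbb{D}_-$, $\Gamma_-|_{N_\lambda}$ bijective onto $H_-$ and $\Gamma_+a=B(\bar\lambda)^*\Gamma_-a$ on $N_\lambda$. $\gamma_\pm,\varphi_\pm$: $\gamma_+(\lambda)x\in N_\lambda$, $\Gamma_+\gamma_+(\lambda)x=x$ ($\lambda\in\mathbb{D}_+$); $\gamma_-(\lambda)x\in N_\lambda$, $\Gamma_-\gamma_-(\lambda)x=x$ ($\lambda\in\mathbb{D}_-$); $\varphi_+=pr_1\circ\gamma_+$, $\varphi_-=pr_2\circ\gamma_-$. $E_\lambda=pr_1(N_\lambda)$ or $pr_2(N_\lambda)$ according as $\lambda\in\mathbb{D}_+$ or $\mathbb{D}_-$; $F^\dagger_\lambda=E_{\bar\lambda}$, $F_\lambda$ its conjugate-linear dual, pairing $((\cdot,\cdot))$. For $x\in H$, $\hat x(\lambda)\in F_\lambda$ is $\omega\mapsto(x,\omega)_H$; $x\mapsto\hat x$ is injective, and $\mathfrak{H}=\{\hat x:x\in H\}$ with $(\hat x,\hat y)_{\mathfrak{H}}=(x,y)_H$. For $S\subseteq\mathbb{H}$, $\hat S=\{(\hat x,\hat y):(x,y)\in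 S\}$. Trivialization: for $\lambda\in\mathbb{D}_+$, $(\varphi_-^\dagger(\lambda)\omega,z)_{H_-}=((\omega,\varphi_-(\bar\lambda)z))$; for $\lambda\in\mathbb{D}_-$, $(\varphi_+^\dagger(\lambda)\omega,z)_{H_+}=((\omega,\varphi_+(\bar\lambda)z))$; $f_s(\lambda)=\varphi_-^\dagger(\lambda)s(\lambda)$ on $\mathbb{D}_+$ and $\varphi_+^\dagger(\lambda)s(\lambda)$ on $\mathbb{D}_-$. *)

theory Defs
  imports "HOL-Analysis.Analysis"
begin

class complex_vector = real_vector +
  fixes scaleC :: "complex \<Rightarrow> 'a \<Rightarrow> 'a" (infixr "*\<^sub>C" 75)
  assumes scaleC_add_right: "scaleC a (x + y) = scaleC a x + scaleC a y"
    and scaleC_add_left: "scaleC (a + b) x = scaleC a x + scaleC b x"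
    and scaleC_scaleC: "scaleC a (scaleC b x) = scaleC (a * b) x"
    and scaleC_one: "scaleC 1 x = x"
    and scaleR_scaleC: "scaleR r x = scaleC (complex_of_real r) x"

text \<open>Inner product linear in the first, conjugate-linear in the second argument
  (the convention of the paper: \<open>(x,\<omega>)\<close> is conjugate-linear in \<open>\<omega>\<close>).
  Together with class banach (whose norm is the same class parameter) this is a
  complex Hilbert space.\<close>
class complex_inner = complex_vector + real_normed_vector +
  fixes cinner :: "'a \<Rightarrow> 'a \<Rightarrow> complex"
  assumes cinner_commute: "cinner x y = cnj (cinner y x)"
    and cinner_add_left: "cinner (x + y) z = cinner x z + cinner y z"
    and cinner_scaleC_left: "cinner (scaleC r x) y = r * cinner x y"
    and cinner_self_real: "Im (cinner x x) = 0"
    and cinner_self_nonneg: "0 \<le> Re (cinner x x)"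
    and cinner_self_zero: "cinner x x = 0 \<longleftrightarrow> x = 0"
    and norm_eq_sqrt_cinner: "norm x = sqrt (Re (cinner x x))"

definition separable_H :: "'a::topological_space itself \<Rightarrow> bool" where
  "separable_H _ \<longleftrightarrow> (\<exists>D::'a set. countable D \<and> closure D = UNIV)"

definition infinite_dimensional :: "'a::complex_vector itself \<Rightarrow> bool" where
  "infinite_dimensional _ \<longleftrightarrow>
     \<not> (\<exists>S::'a set. finite S \<and> (\<forall>x. \<exists>c. x = (\<Sum>s\<in>S. c s *\<^sub>C s)))"

definition clinear :: "('a::complex_vector \<Rightarrow> 'b::complex_vector) \<Rightarrow> bool" where
  "clinear L \<longleftrightarrow> (\<forall>x y. L (x + y) = L x + L y) \<and> (\<forall>c x. L (c *\<^sub>C x) = c *\<^sub>C L x)"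

definition bounded_clinear :: "('a::{complex_vector,real_normed_vector} \<Rightarrow> 'b::{complex_vector,real_normed_vector}) \<Rightarrow> bool" where
  "bounded_clinear L \<longleftrightarrow> clinear L \<and> (\<exists>K. \<forall>x. norm (L x) \<le> K * norm x)"

definition cadjoint :: "('a::complex_inner \<Rightarrow> 'b::complex_inner) \<Rightarrow> 'b \<Rightarrow> 'a" where
  "cadjoint L y = (THE w. \<forall>x. cinner (L x) y = cinner x w)"

definition closed_csubspace :: "'a::{complex_vector,topological_space} set \<Rightarrow> bool" where
  "closed_csubspace M \<longleftrightarrow> 0 \<in> M \<and> (\<forall>x\<in>M. \<forall>y\<in>M. x + y \<in> M)
     \<and> (\<forall>c. \<forall>x\<in>M. c *\<^sub>C x \<in> M) \<and> closed M"

definition completely_non_unitary :: "('a::complex_inner \<Rightarrow> 'a) \<Rightarrow> bool" where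
  "completely_non_unitary T \<longleftrightarrow>
     \<not> (\<exists>M::'a::complex_inner set. closed_csubspace M \<and> M \<noteq> {0}
          \<and> T ` M \<subseteq> M \<and> cadjoint T ` M \<subseteq> M
          \<and> (\<forall>x\<in>M. cadjoint T (T x) = x \<and> T (cadjoint T x) = x))"

text \<open>The norm on pairs (library instance for products) is the Hilbert direct sum norm.\<close>
definition kform :: "'a::complex_inner \<times> 'a \<Rightarrow> 'a \<times> 'a \<Rightarrow> complex" where
  "kform a b = \<i> * cinner (fst a) (fst b) - \<i> * cinner (snd a) (snd b)"

definition s_orth :: "('a::complex_inner \<times> 'a) set \<Rightarrow> ('a \<times> 'a) set" where
  "s_orth S = {a. \<forall>b\<in>S. kform a b = 0}"

definition KK :: "('a::complex_inner \<Rightarrow> 'a) \<Rightarrow> 'a set" where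
  "KK T = {x. x - cadjoint T (T x) = 0}"

definition A_T :: "('a::complex_inner \<Rightarrow> 'a) \<Rightarrow> ('a \<times> 'a) set" where
  "A_T T = {(x, T x) | x. x \<in> KK T}"

text \<open>Points of \<open>\<DD>\<^sub>+\<close> are \<open>(True, \<lambda>)\<close>, points of \<open>\<DD>\<^sub>-\<close> are \<open>(False, \<lambda>)\<close>, \<open>|\<lambda>| < 1\<close>.\<close>

definition boundary_quadruple ::
  "('a::complex_inner \<Rightarrow> 'a) \<Rightarrow> ('a \<times> 'a \<Rightarrow> 'p::{complex_inner,banach})
     \<Rightarrow> ('a \<times> 'a \<Rightarrow> 'm::{complex_inner,banach}) \<Rightarrow> bool" where
  "boundary_quadruple T Gp Gm \<longleftrightarrow>
     (let D = s_orth (A_T T) in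
       (\<forall>a\<in>D. \<forall>b\<in>D. Gp (a + b) = Gp a + Gp b \<and> Gm (a + b) = Gm a + Gm b)
     \<and> (\<forall>c. \<forall>a\<in>D. Gp (c *\<^sub>C fst a, c *\<^sub>C snd a) = c *\<^sub>C Gp a
                 \<and> Gm (c *\<^sub>C fst a, c *\<^sub>C snd a) = c *\<^sub>C Gm a)
     \<and> (\<exists>K. \<forall>a\<in>D. norm (Gp a, Gm a) \<le> K * norm a)
     \<and> (\<forall>yp ym. \<exists>a\<in>D. Gp a = yp \<and> Gm a = ym)
     \<and> {a\<in>D. Gp a = 0 \<and> Gm a = 0} = A_T T
     \<and> (\<forall>a\<in>D. \<forall>b\<in>D. kform a b = \<i> * cinner (Gp a) (Gp b) - \<i> * cinner (Gm a) (Gm b)))"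

definition Nl :: "('a::complex_inner \<Rightarrow> 'a) \<Rightarrow> bool \<Rightarrow> complex \<Rightarrow> ('a \<times> 'a) set" where
  "Nl T pl l = (if pl then {(x, l *\<^sub>C x) | x. True} else {(l *\<^sub>C x, x) | x. True})
               \<inter> s_orth (A_T T)"

definition contractive_weyl_function ::
  "('a::complex_inner \<Rightarrow> 'a) \<Rightarrow> ('a \<times> 'a \<Rightarrow> 'p::{complex_inner,banach})
     \<Rightarrow> ('a \<times> 'a \<Rightarrow> 'm::{complex_inner,banach}) \<Rightarrow> (complex \<Rightarrow> 'p \<Rightarrow> 'm) \<Rightarrow> bool" where
  "contractive_weyl_function T Gp Gm B \<longleftrightarrow>
     (\<forall>l. norm l < 1 \<longrightarrow>
        bij_betw Gp (Nl T True l) UNIV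
      \<and> (\<forall>a\<in>Nl T True l. Gm a = B l (Gp a))
      \<and> (\<exists>c<1. \<forall>x. norm (B l x) \<le> c * norm x))
   \<and> (\<forall>l. norm l < 1 \<longrightarrow>
        bij_betw Gm (Nl T False l) UNIV
      \<and> (\<forall>a\<in>Nl T False l. Gp a = cadjoint (B (cnj l)) (Gm a)))"

definition gamma_p :: "('a::complex_inner \<Rightarrow> 'a) \<Rightarrow> ('a \<times> 'a \<Rightarrow> 'p) \<Rightarrow> complex \<Rightarrow> 'p \<Rightarrow> 'a \<times> 'a" where
  "gamma_p T Gp l x = (THE a. a \<in> Nl T True l \<and> Gp a = x)"

definition gamma_m :: "('a::complex_inner \<Rightarrow> 'a) \<Rightarrow> ('a \<times> 'a \<Rightarrow> 'm) \<Rightarrow> complex \<Rightarrow> 'm \<Rightarrow> 'a \<times> 'a" where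
  "gamma_m T Gm l x = (THE a. a \<in> Nl T False l \<and> Gm a = x)"

definition phi_p :: "('a::complex_inner \<Rightarrow> 'a) \<Rightarrow> ('a \<times> 'a \<Rightarrow> 'p) \<Rightarrow> complex \<Rightarrow> 'p \<Rightarrow> 'a" where
  "phi_p T Gp l x = fst (gamma_p T Gp l x)"

definition phi_m :: "('a::complex_inner \<Rightarrow> 'a) \<Rightarrow> ('a \<times> 'a \<Rightarrow> 'm) \<Rightarrow> complex \<Rightarrow> 'm \<Rightarrow> 'a" where
  "phi_m T Gm l x = snd (gamma_m T Gm l x)"

definition El :: "('a::complex_inner \<Rightarrow> 'a) \<Rightarrow> bool \<Rightarrow> complex \<Rightarrow> 'a set" where
  "El T pl l = (if pl then fst ` Nl T True l else snd ` Nl T False l)"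

text \<open>Sections \<open>s\<close> assign to each \<open>\<lambda>\<close> a conjugate-linear functional on
  \<open>F\<^sup>\<dagger>\<^sub>\<lambda> = E\<^sub>\<lambda>\<^sub>\<^bold>-\<close> (with \<open>\<lambda>\<^bold>-\<close> the conjugate point in the other disc);
  functionals are represented as functions on H vanishing off \<open>F\<^sup>\<dagger>\<^sub>\<lambda>\<close>
  (and sections vanish for \<open>|\<lambda>| \<ge> 1\<close>), so equality of sections is equality of functions.\<close>
definition hat :: "('a::complex_inner \<Rightarrow> 'a) \<Rightarrow> 'a \<Rightarrow> bool \<Rightarrow> complex \<Rightarrow> 'a \<Rightarrow> complex" where
  "hat T x pl l \<omega> = (if norm l < 1 \<and> \<omega> \<in> El T (\<not> pl) (cnj l) then cinner x \<omega> else 0)"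

definition frakH :: "('a::complex_inner \<Rightarrow> 'a) \<Rightarrow> (bool \<Rightarrow> complex \<Rightarrow> 'a \<Rightarrow> complex) set" where
  "frakH T = {hat T x | x. True}"

definition hat_rel :: "('a::complex_inner \<Rightarrow> 'a) \<Rightarrow> ('a \<times> 'a) set
     \<Rightarrow> ((bool \<Rightarrow> complex \<Rightarrow> 'a \<Rightarrow> complex) \<times> (bool \<Rightarrow> complex \<Rightarrow> 'a \<Rightarrow> complex)) set" where
  "hat_rel T S = {(hat T x, hat T y) | x y. (x, y) \<in> S}"

text \<open>Trivialization: \<open>f\<^sub>s(\<lambda>) = \<phi>\<^sub>-\<^sup>\<dagger>(\<lambda>) s(\<lambda>) \<in> H\<^sub>-\<close> for \<open>\<lambda> \<in> \<DD>\<^sub>+\<close>, and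
  \<open>f\<^sub>s(\<lambda>) = \<phi>\<^sub>+\<^sup>\<dagger>(\<lambda>) s(\<lambda>) \<in> H\<^sub>+\<close> for \<open>\<lambda> \<in> \<DD>\<^sub>-\<close>.\<close>
definition f_plus :: "('a::complex_inner \<Rightarrow> 'a) \<Rightarrow> ('a \<times> 'a \<Rightarrow> 'm::complex_inner)
     \<Rightarrow> (bool \<Rightarrow> complex \<Rightarrow> 'a \<Rightarrow> complex) \<Rightarrow> complex \<Rightarrow> 'm" where
  "f_plus T Gm s l = (THE w. \<forall>z. cinner w z = s True l (phi_m T Gm (cnj l) z))"

definition f_minus :: "('a::complex_inner \<Rightarrow> 'a) \<Rightarrow> ('a \<times> 'a \<Rightarrow> 'p::complex_inner)
     \<Rightarrow> (bool \<Rightarrow> complex \<Rightarrow> 'a \<Rightarrow> complex) \<Rightarrow> complex \<Rightarrow> 'p" where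
  "f_minus T Gp s l = (THE w. \<forall>z. cinner w z = s False l (phi_p T Gp (cnj l) z))"

end

theory Submission
  imports Defs
begin

lemma scaleC_zero_left [simp]: "(0::complex) *\<^sub>C (x::'a::complex_vector) = 0"
  by (metis scaleR_scaleC scale_zero_left of_real_0)

lemma scaleC_zero_right [simp]: "c *\<^sub>C (0::'a::complex_vector) = 0"
proof -
  have "c *\<^sub>C (0::'a) = c *\<^sub>C 0 + c *\<^sub>C 0" by (metis scaleC_add_right add_0)
  then show ?thesis by simp
qed

lemma scaleC_minus_left: "(- c) *\<^sub>C (x::'a::complex_vector) = - (c *\<^sub>C x)"
proof -
  have "c *\<^sub>C x + (- c) *\<^sub>C x = 0" by (metis scaleC_add_left add.right_inverse scaleC_zero_left)
  then show ?thesis by (simp add: eq_neg_iff_add_eq_0 add.commute)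
qed

lemma scaleC_minus_right: "c *\<^sub>C (- x::'a::complex_vector) = - (c *\<^sub>C x)"
proof -
  have "c *\<^sub>C x + c *\<^sub>C (-x) = 0" by (metis scaleC_add_right add.right_inverse scaleC_zero_right)
  then show ?thesis by (simp add: eq_neg_iff_add_eq_0 add.commute)
qed

lemma scaleC_diff_right: "c *\<^sub>C (x - y::'a::complex_vector) = c *\<^sub>C x - c *\<^sub>C y"
  by (metis diff_conv_add_uminus scaleC_add_right scaleC_minus_right)

lemma scaleC_diff_left: "(c - d) *\<^sub>C (x::'a::complex_vector) = c *\<^sub>C x - d *\<^sub>C x"
  by (metis diff_conv_add_uminus scaleC_add_left scaleC_minus_left)

lemma scaleC_one' [simp]: "1 *\<^sub>C (x::'a::complex_vector) = x" by (rule scaleC_one)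

lemma minus_scaleC: "- (x::'a::complex_vector) = (-1) *\<^sub>C x"
  by (simp add: scaleC_minus_left)

lemma cinner_zero_left [simp]: "cinner 0 (y::'a::complex_inner) = 0"
proof -
  have "cinner (0+0) y = cinner 0 y + cinner 0 y" by (rule cinner_add_left)
  then show ?thesis by simp
qed

lemma cinner_add_right: "cinner (x::'a::complex_inner) (y + z) = cinner x y + cinner x z"
  by (metis cinner_commute cinner_add_left complex_cnj_add)

lemma cinner_scaleC_right: "cinner (x::'a::complex_inner) (c *\<^sub>C y) = cnj c * cinner x y"
  by (metis cinner_commute cinner_scaleC_left complex_cnj_mult)

lemma cinner_zero_right [simp]: "cinner (x::'a::complex_inner) 0 = 0"
  by (metis cinner_commute cinner_zero_left complex_cnj_zero)

lemma cinner_minus_left: "cinner (- x::'a::complex_inner) y = - cinner x y"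
  by (metis add.right_inverse cinner_add_left cinner_zero_left eq_neg_iff_add_eq_0)

lemma cinner_minus_right: "cinner (x::'a::complex_inner) (- y) = - cinner x y"
  by (metis add.right_inverse cinner_add_right cinner_zero_right eq_neg_iff_add_eq_0)

lemma cinner_diff_left: "cinner (x - y::'a::complex_inner) z = cinner x z - cinner y z"
  by (metis diff_conv_add_uminus cinner_add_left cinner_minus_left)

lemma cinner_diff_right: "cinner (x::'a::complex_inner) (y - z) = cinner x y - cinner x z"
  by (metis diff_conv_add_uminus cinner_add_right cinner_minus_right)

lemmas cinner_simps = cinner_add_left cinner_add_right cinner_diff_left cinner_diff_right
  cinner_minus_left cinner_minus_right cinner_scaleC_left cinner_scaleC_right

lemma cinner_self: "cinner (x::'a::complex_inner) x = complex_of_real ((norm x)^2)"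
proof -
  have "(norm x)^2 = Re (cinner x x)" using norm_eq_sqrt_cinner[of x] cinner_self_nonneg[of x] by simp
  then show ?thesis using cinner_self_real[of x] by (simp add: complex_eq_iff)
qed

lemma cinner_self_eq_0 [simp]: "cinner (x::'a::complex_inner) x = 0 \<longleftrightarrow> x = 0"
  by (rule cinner_self_zero)

lemma norm_scaleC: "norm (c *\<^sub>C (x::'a::complex_inner)) = cmod c * norm x"
proof -
  have "complex_of_real ((norm (c *\<^sub>C x))^2) = c * cnj c * complex_of_real ((norm x)^2)"
    by (metis cinner_self cinner_scaleC_left cinner_scaleC_right mult.assoc)
  also have "c * cnj c = complex_of_real ((cmod c)^2)" by (metis complex_norm_square)
  finally have "(norm (c *\<^sub>C x))^2 = ((cmod c) * norm x)^2"
    by (metis of_real_eq_iff of_real_mult power_mult_distrib)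
  then show ?thesis by (simp add: power2_eq_iff_nonneg)
qed

lemma cinner_expand: "cinner (x - t *\<^sub>C y) (x - t *\<^sub>C (y::'a::complex_inner))
   = cinner x x - cnj t * cinner x y - t * cinner y x + t * cnj t * cinner y y"
  by (simp add: cinner_simps algebra_simps)

lemma cauchy_schwarz: "cmod (cinner x y) \<le> norm (x::'a::complex_inner) * norm y"
proof (cases "y = 0")
  case True then show ?thesis by simp
next
  case False
  define a where "a = cinner x y"
  define n where "n = (norm y)^2"
  have n0: "n > 0" using False by (simp add: n_def)
  define t where "t = a / complex_of_real n"
  have yy: "cinner y y = complex_of_real n" by (simp add: cinner_self n_def)
  have yx: "cinner y x = cnj a" by (simp add: a_def cinner_commute[of y x])
  have "cinner (x - t *\<^sub>C y) (x - t *\<^sub>C y) = complex_of_real ((norm x)^2) - complex_of_real ((cmod a)^2 / n)"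
    unfolding cinner_expand yy yx using n0
    by (simp add: cinner_self t_def a_def[symmetric] field_simps complex_mult_cnj flip: of_real_mult)
       (simp add: complex_eq_iff power2_eq_square cmod_power2[of a, unfolded power2_eq_square] algebra_simps)
  moreover have "0 \<le> Re (cinner (x - t *\<^sub>C y) (x - t *\<^sub>C y))" by (rule cinner_self_nonneg)
  ultimately have "(cmod a)^2 / n \<le> (norm x)^2" by simp
  then have "(cmod a)^2 \<le> (norm x)^2 * (norm y)^2" using n0 by (simp add: n_def divide_le_eq)
  then have "(cmod a)^2 \<le> (norm x * norm y)^2" by (simp add: power_mult_distrib)
  then show ?thesis unfolding a_def by (meson abs_le_square_iff abs_norm_cancel norm_ge_zero order.trans abs_ge_self mult_nonneg_nonneg power2_le_imp_le)
qed

lemma norm_sub_proj: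
  fixes w u :: "'a::complex_inner"
  assumes "u \<noteq> 0"
  shows "(norm (w - (cinner w u / complex_of_real ((norm u)^2)) *\<^sub>C u))^2
        = (norm w)^2 - (cmod (cinner w u))^2 / (norm u)^2"
proof -
  define a where "a = cinner w u"
  define n where "n = (norm u)^2"
  have n0: "n > 0" using assms by (simp add: n_def)
  define t where "t = a / complex_of_real n"
  have yy: "cinner u u = complex_of_real n" by (simp add: cinner_self n_def)
  have yx: "cinner u w = cnj a" by (simp add: a_def cinner_commute[of u w])
  have "cinner (w - t *\<^sub>C u) (w - t *\<^sub>C u) = complex_of_real ((norm w)^2) - complex_of_real ((cmod a)^2 / n)"
    unfolding cinner_expand yy yx using n0
    by (simp add: cinner_self t_def a_def[symmetric] field_simps complex_mult_cnj flip: of_real_mult)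
       (simp add: complex_eq_iff power2_eq_square cmod_power2[of a, unfolded power2_eq_square] algebra_simps)
  then have "complex_of_real ((norm (w - t *\<^sub>C u))^2) = complex_of_real ((norm w)^2 - (cmod a)^2 / n)"
    by (simp add: cinner_self)
  then show ?thesis unfolding t_def a_def n_def by (simp only: of_real_eq_iff)
qed

lemma parallelogram:
  fixes a b :: "'a::complex_inner"
  shows "(norm (a + b))^2 + (norm (a - b))^2 = 2 * (norm a)^2 + 2 * (norm b)^2"
proof -
  have "cinner (a + b) (a + b) + cinner (a - b) (a - b) = 2 * cinner a a + 2 * cinner b b"
    by (simp add: cinner_simps algebra_simps)
  then have "complex_of_real ((norm (a + b))^2 + (norm (a - b))^2) = complex_of_real (2 * (norm a)^2 + 2 * (norm b)^2)"
    by (simp add: cinner_self)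
  then show ?thesis by (simp only: of_real_eq_iff)
qed

lemma closed_csubspace_scaleR:
  assumes "closed_csubspace V" "x \<in> V" shows "scaleR r x \<in> V"
  using assms by (simp add: closed_csubspace_def scaleR_scaleC)

lemma closed_csubspace_diff:
  assumes "closed_csubspace V" "x \<in> V" "y \<in> V" shows "x - y \<in> V"
proof -
  have "(-1) *\<^sub>C y \<in> V" using assms by (simp add: closed_csubspace_def)
  then have "x + (-1) *\<^sub>C y \<in> V" using assms by (simp add: closed_csubspace_def)
  then show ?thesis by (simp add: minus_scaleC[symmetric])
qed

lemma proj_exists:
  fixes x :: "'a::{complex_inner,banach}"
  assumes V: "closed_csubspace V"
  shows "\<exists>v\<in>V. \<forall>u\<in>V. cinner (x - v) u = 0"
proof -
  have V0: "0 \<in> V" and Vadd: "\<And>a b. a \<in> V \<Longrightarrow> b \<in> V \<Longrightarrow> a + b \<in> V"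
    and Vsc: "\<And>c a. a \<in> V \<Longrightarrow> c *\<^sub>C a \<in> V" and Vcl: "closed V"
    using V by (auto simp: closed_csubspace_def)
  define S where "S = (\<lambda>v. norm (x - v)) ` V"
  define d where "d = Inf S"
  have Sne: "S \<noteq> {}" using V0 by (auto simp: S_def)
  have Sbdd: "bdd_below S" unfolding S_def by (rule bdd_belowI[of _ 0]) auto
  have dle: "d \<le> norm (x - v)" if "v \<in> V" for v
    unfolding d_def using that Sbdd by (auto simp: S_def intro!: cInf_lower)
  have d0: "0 \<le> d" using dle[OF V0] Sne unfolding d_def S_def
    by (auto intro!: cInf_greatest)
  have "\<forall>n. \<exists>v. v \<in> V \<and> norm (x - v) < d + 1 / real (Suc n)"
  proof
    fix n
    have "Inf S < d + 1 / real (Suc n)" unfolding d_def by simp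
    from cInf_lessD[OF Sne this] show "\<exists>v. v \<in> V \<and> norm (x - v) < d + 1 / real (Suc n)"
      by (auto simp: S_def)
  qed
  then obtain vs where vsV: "\<And>n. vs n \<in> V" and vsd: "\<And>n. norm (x - vs n) < d + 1 / real (Suc n)"
    by metis
  define C where "C = 4 * d + 2"
  have C0: "C > 0" using d0 by (simp add: C_def)
  have sq_bound: "(norm (x - vs n))^2 \<le> d^2 + C / real (Suc n)" for n
  proof -
    define e where "e = 1 / real (Suc n)"
    have e0: "0 < e" "e \<le> 1" by (auto simp: e_def)
    have "norm (x - vs n) \<le> d + e" using vsd[of n] by (simp add: e_def)
    then have "(norm (x - vs n))^2 \<le> (d + e)^2"
      by (intro power_mono) auto
    also have "(d + e)^2 = d^2 + (2 * d + e) * e" by (simp add: power2_eq_square algebra_simps)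
    also have "(2 * d + e) * e \<le> (C / 2) * e" using e0 d0
      by (intro mult_right_mono) (auto simp: C_def)
    also have "(C / 2) * e \<le> C * e" using C0 e0 by simp
    finally show ?thesis by (simp add: e_def)
  qed
  have diff_bound: "(norm (vs m - vs n))^2 \<le> 2 * C * (1 / real (Suc m) + 1 / real (Suc n))" for m n
  proof -
    define a where "a = x - vs m"
    define b where "b = x - vs n"
    define w where "w = scaleR (1/2) (vs m + vs n)"
    have wV: "w \<in> V" unfolding w_def by (intro closed_csubspace_scaleR[OF V] Vadd vsV)
    have ab: "a + b = scaleR 2 (x - w)" unfolding a_def b_def w_def scaleR_diff_right scaleR_scaleR by (simp add: scaleR_2)
    have "norm (a + b) = 2 * norm (x - w)" by (simp add: ab)
    then have "(norm (a + b))^2 \<ge> 4 * d^2" using dle[OF wV] d0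
      by (simp add: power2_eq_square mult_mono)
    moreover have "a - b = vs n - vs m" by (simp add: a_def b_def)
    moreover note parallelogram[of a b]
    moreover have "(norm a)^2 \<le> d^2 + C / real (Suc m)" using sq_bound[of m] by (simp add: a_def)
    moreover have "(norm b)^2 \<le> d^2 + C / real (Suc n)" using sq_bound[of n] by (simp add: b_def)
    ultimately have "(norm (vs n - vs m))^2 \<le> 2 * C / real (Suc m) + 2 * C / real (Suc n)"
      by simp
    then show ?thesis by (simp add: norm_minus_commute algebra_simps)
  qed
  have "Cauchy vs"
  proof (rule metric_CauchyI)
    fix e :: real assume e: "e > 0"
    obtain M where M: "4 * C / e^2 < real M" using reals_Archimedean2 by blast
    have "dist (vs m) (vs n) < e" if "m \<ge> M" "n \<ge> M" for m n
    proof -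
      have Mpos: "real (Suc M) > 0" by simp
      have "1 / real (Suc m) \<le> 1 / real (Suc M)" "1 / real (Suc n) \<le> 1 / real (Suc M)"
        using that by (auto simp: frac_le)
      then have "1 / real (Suc m) + 1 / real (Suc n) \<le> 2 / real (Suc M)" by simp
      then have "2 * C * (1 / real (Suc m) + 1 / real (Suc n)) \<le> 2 * C * (2 / real (Suc M))"
        using C0 by (intro mult_left_mono) auto
      then have "(norm (vs m - vs n))^2 \<le> 2 * C * (2 / real (Suc M))"
        using diff_bound[of m n] by linarith
      also have "\<dots> = 4 * C / real (Suc M)" by simp
      also have "\<dots> < e^2"
      proof -
        have e2: "e^2 > 0" using e by simp
        have "4 * C < real M * e^2" using M e2 by (simp add: divide_less_eq algebra_simps)
        moreover have "e^2 * real (Suc M) = real M * e^2 + e^2" by (simp add: algebra_simps)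
        ultimately have "4 * C < e^2 * real (Suc M)" using e2 by linarith
        then show ?thesis using Mpos by (simp add: divide_less_eq mult.commute)
      qed
      finally have "(norm (vs m - vs n))^2 < e^2" .
      then have "norm (vs m - vs n) < e" using e by (simp add: power_less_imp_less_base)
      then show ?thesis by (simp add: dist_norm)
    qed
    then show "\<exists>M. \<forall>m\<ge>M. \<forall>n\<ge>M. dist (vs m) (vs n) < e" by blast
  qed
  then obtain v where lim: "vs \<longlonglongrightarrow> v" using Cauchy_convergent_iff convergent_def by blast
  have vV: "v \<in> V" using Vcl vsV lim closed_sequentially by blast
  have "norm (x - v) \<le> d"
  proof (rule LIMSEQ_le)
    show "(\<lambda>n. norm (x - vs n)) \<longlonglongrightarrow> norm (x - v)" by (intro tendsto_intros lim)
    show "(\<lambda>n. d + 1 / real (Suc n)) \<longlonglongrightarrow> d"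
      using tendsto_add[OF tendsto_const[of d] LIMSEQ_inverse_real_of_nat] by (simp add: inverse_eq_divide)
    show "\<exists>N. \<forall>n\<ge>N. norm (x - vs n) \<le> d + 1 / real (Suc n)" using vsd less_imp_le by blast
  qed
  then have nd: "norm (x - v) = d" using dle[OF vV] by simp
  have "cinner (x - v) u = 0" if uV: "u \<in> V" for u
  proof (rule ccontr)
    assume ne: "cinner (x - v) u \<noteq> 0"
    then have u0: "u \<noteq> 0" by auto
    define t where "t = cinner (x - v) u / complex_of_real ((norm u)^2)"
    have "v + t *\<^sub>C u \<in> V" using uV vV by (intro Vadd Vsc)
    then have "d \<le> norm (x - (v + t *\<^sub>C u))" by (rule dle)
    then have "d^2 \<le> (norm ((x - v) - t *\<^sub>C u))^2" using d0 by (simp add: power_mono algebra_simps)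
    also have "\<dots> = (norm (x - v))^2 - (cmod (cinner (x - v) u))^2 / (norm u)^2"
      unfolding t_def by (rule norm_sub_proj[OF u0])
    finally have "(cmod (cinner (x - v) u))^2 / (norm u)^2 \<le> 0" using nd by simp
    moreover have "(cmod (cinner (x - v) u))^2 / (norm u)^2 > 0" using ne u0 by simp
    ultimately show False by simp
  qed
  then show ?thesis using vV by blast
qed

lemma riesz:
  fixes f :: "'a::{complex_inner,banach} \<Rightarrow> complex"
  assumes add: "\<And>x y. f (x + y) = f x + f y"
    and scal: "\<And>c x. f (c *\<^sub>C x) = c * f x"
    and bnd: "\<And>x. cmod (f x) \<le> K * norm x"
  shows "\<exists>w. \<forall>x. f x = cinner x w"
proof (cases "\<forall>x. f x = 0")
  case True then show ?thesis by (intro exI[of _ 0]) simp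
next
  case False
  then obtain x0 where fx0: "f x0 \<noteq> 0" by blast
  have fminus: "f (a - b) = f a - f b" for a b
    by (metis add diff_add_cancel eq_diff_eq)
  have bl: "bounded_linear f"
  proof (rule bounded_linear_intro[where K = K])
    show "f (x + y) = f x + f y" for x y by (rule add)
    show "f (scaleR r x) = scaleR r (f x)" for r x by (simp add: scaleR_scaleC scal scaleR_conv_of_real)
    show "norm (f x) \<le> norm x * K" for x using bnd[of x] by (simp add: mult.commute)
  qed
  define V where "V = {x. f x = 0}"
  have V: "closed_csubspace V"
  proof -
    have "closed (f -` {0})" by (intro closed_vimage closed_singleton linear_continuous_on bl)
    moreover have "f 0 = 0" using add[of 0 0] by simp
    ultimately show ?thesis unfolding closed_csubspace_def V_def
      by (auto simp: add scal vimage_def)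
  qed
  obtain v where vV: "v \<in> V" and orth: "\<And>u. u \<in> V \<Longrightarrow> cinner (x0 - v) u = 0"
    using proj_exists[OF V, of x0] by blast
  define w0 where "w0 = x0 - v"
  have fw0: "f w0 = f x0" using vV by (simp add: w0_def fminus V_def)
  have orth': "cinner u w0 = 0" if "u \<in> V" for u
    using orth[OF that] by (metis w0_def cinner_commute complex_cnj_zero)
  define nw where "nw = cinner w0 w0"
  have f0: "f 0 = 0" using add[of 0 0] by simp
  have nw0: "nw \<noteq> 0" using fw0 fx0 f0 by (auto simp: nw_def)
  have "f z = cinner z (cnj (f w0 / nw) *\<^sub>C w0)" for z
  proof -
    have "z - (f z / f w0) *\<^sub>C w0 \<in> V"
      using fw0 fx0 by (simp add: V_def fminus scal)
    then have "cinner (z - (f z / f w0) *\<^sub>C w0) w0 = 0" by (rule orth')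
    then have "cinner z w0 = (f z / f w0) * nw" by (simp add: cinner_simps nw_def)
    then show ?thesis using nw0 fw0 fx0 by (simp add: cinner_scaleC_right field_simps)
  qed
  then show ?thesis by blast
qed

lemma cinner_ext_right:
  fixes w1 w2 :: "'a::complex_inner"
  assumes "\<And>z. cinner z w1 = cinner z w2" shows "w1 = w2"
proof -
  have "cinner (w1 - w2) (w1 - w2) = 0" using assms by (simp add: cinner_diff_right)
  then show ?thesis by simp
qed

lemma cinner_ext_left:
  fixes w1 w2 :: "'a::complex_inner"
  assumes "\<And>z. cinner w1 z = cinner w2 z" shows "w1 = w2"
proof -
  have "cinner (w1 - w2) (w1 - w2) = 0" using assms by (simp add: cinner_diff_left)
  then show ?thesis by simp
qed

lemma cadjoint_eq:
  fixes L :: "'a::complex_inner \<Rightarrow> 'b::complex_inner"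
  assumes "\<And>x. cinner (L x) y = cinner x w" shows "cadjoint L y = w"
  unfolding cadjoint_def
proof (rule the_equality)
  show "\<forall>x. cinner (L x) y = cinner x w" using assms by blast
  fix w' assume "\<forall>x. cinner (L x) y = cinner x w'"
  then show "w' = w" using assms by (intro cinner_ext_right) metis
qed

lemma perp_perp:
  fixes x :: "'a::{complex_inner,banach}"
  assumes V: "closed_csubspace V"
    and h: "\<And>y. (\<And>v. v \<in> V \<Longrightarrow> cinner y v = 0) \<Longrightarrow> cinner x y = 0"
  shows "x \<in> V"
proof -
  obtain v where vV: "v \<in> V" and o: "\<And>u. u \<in> V \<Longrightarrow> cinner (x - v) u = 0"
    using proj_exists[OF V, of x] by blast
  have "cinner x (x - v) = 0" by (rule h) (rule o)
  moreover have "cinner v (x - v) = 0" using o[OF vV] by (metis cinner_commute complex_cnj_zero)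
  ultimately have "cinner (x - v) (x - v) = 0" by (simp add: cinner_diff_left)
  then show ?thesis using vV by simp
qed

lemma closed_range:
  fixes L :: "'a::{complex_inner,banach} \<Rightarrow> 'b::{complex_inner,banach}"
  assumes V: "closed_csubspace V" and bl: "bounded_linear L"
    and hom: "\<And>c x. L (c *\<^sub>C x) = c *\<^sub>C L x"
    and low: "\<And>k. k \<in> V \<Longrightarrow> m * norm k \<le> norm (L k)" and m: "m > 0"
  shows "closed_csubspace (L ` V)"
proof -
  interpret L: bounded_linear L by (rule bl)
  have V0: "0 \<in> V" and Vadd: "\<And>a b. a \<in> V \<Longrightarrow> b \<in> V \<Longrightarrow> a + b \<in> V"
    and Vsc: "\<And>c a. a \<in> V \<Longrightarrow> c *\<^sub>C a \<in> V" and Vcl: "closed V"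
    using V by (auto simp: closed_csubspace_def)
  have Vdiff: "a - b \<in> V" if "a \<in> V" "b \<in> V" for a b using closed_csubspace_diff[OF V that] .
  have "closed (L ` V)"
    unfolding closed_sequential_limits
  proof (intro allI impI, elim conjE)
    fix ys y assume ysV: "\<forall>n. ys n \<in> L ` V" and lim: "ys \<longlonglongrightarrow> y"
    have "\<forall>n. \<exists>k. k \<in> V \<and> ys n = L k" using ysV by blast
    then obtain ks where ksV: "\<And>n. ks n \<in> V" and ks: "\<And>n. ys n = L (ks n)"
      by metis
    have cy: "Cauchy ys" using lim by (rule LIMSEQ_imp_Cauchy)
    have "Cauchy ks"
    proof (rule metric_CauchyI)
      fix e :: real assume e: "e > 0"
      have me: "m * e > 0" using e m by simp
      obtain M where M: "\<And>a b. a \<ge> M \<Longrightarrow> b \<ge> M \<Longrightarrow> dist (ys a) (ys b) < m * e"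
        using metric_CauchyD[OF cy me] by blast
      have "dist (ks a) (ks b) < e" if "a \<ge> M" "b \<ge> M" for a b
      proof -
        have "m * norm (ks a - ks b) \<le> norm (L (ks a - ks b))" by (intro low Vdiff ksV)
        also have "\<dots> = dist (ys a) (ys b)" by (simp add: ks L.diff dist_norm)
        also have "\<dots> < m * e" using M that by blast
        finally have "m * norm (ks a - ks b) < m * e" .
        then show ?thesis using m by (simp add: dist_norm)
      qed
      then show "\<exists>M. \<forall>a\<ge>M. \<forall>b\<ge>M. dist (ks a) (ks b) < e" by blast
    qed
    then obtain k where kl: "ks \<longlonglongrightarrow> k" using Cauchy_convergent_iff convergent_def by blast
    have kV: "k \<in> V" using Vcl ksV kl closed_sequentially by blast
    have "(\<lambda>n. L (ks n)) \<longlonglongrightarrow> L k" by (rule L.tendsto[OF kl])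
    then have "ys \<longlonglongrightarrow> L k" by (simp add: ks[symmetric])
    then have "y = L k" using lim LIMSEQ_unique by blast
    then show "y \<in> L ` V" using kV by blast
  qed
  moreover have "0 \<in> L ` V" using V0 L.zero by force
  moreover have "a + b \<in> L ` V" if "a \<in> L ` V" "b \<in> L ` V" for a b
    using that by (auto simp: L.add[symmetric] intro!: imageI Vadd)
  moreover have "c *\<^sub>C a \<in> L ` V" if "a \<in> L ` V" for c a
    using that by (auto simp: hom[symmetric] intro!: imageI Vsc)
  ultimately show ?thesis unfolding closed_csubspace_def by blast
qed

lemma bl_scaleC: "bounded_linear (\<lambda>y::'a::complex_inner. c *\<^sub>C y)"
proof (rule bounded_linear_intro[where K = "cmod c"])
  show "c *\<^sub>C (x + y) = c *\<^sub>C x + c *\<^sub>C y" for x y :: 'a by (rule scaleC_add_right)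
  show "c *\<^sub>C (r *\<^sub>R x) = r *\<^sub>R (c *\<^sub>C x)" for r and x :: 'a
    unfolding scaleR_scaleC scaleC_scaleC by (simp only: mult.commute)
  show "norm (c *\<^sub>C x) \<le> norm x * cmod c" for x :: 'a by (simp add: norm_scaleC)
qed

locale contr =
  fixes T :: "'a::{complex_inner,banach} \<Rightarrow> 'a"
  assumes lin: "clinear T" and contr: "\<And>x. norm (T x) \<le> norm x"
begin

lemma T_add: "T (x + y) = T x + T y" using lin by (simp add: clinear_def)
lemma T_scaleC: "T (c *\<^sub>C x) = c *\<^sub>C T x" using lin by (simp add: clinear_def)
lemma T_zero [simp]: "T 0 = 0" by (metis scaleC_zero_left T_scaleC)
lemma T_minus: "T (- x) = - T x" by (metis minus_scaleC T_scaleC)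
lemma T_diff: "T (x - y) = T x - T y" by (metis diff_conv_add_uminus T_add T_minus)

lemma bl_T: "bounded_linear T"
  by (rule bounded_linear_intro[where K=1]) (auto simp: T_add scaleR_scaleC T_scaleC contr)

abbreviation adj where "adj \<equiv> cadjoint T"

lemma adj_exists: "\<exists>w. \<forall>x. cinner (T x) y = cinner x w"
proof (rule riesz[where K = "norm y"])
  show "cinner (T (a + b)) y = cinner (T a) y + cinner (T b) y" for a b by (simp add: T_add cinner_simps)
  show "cinner (T (c *\<^sub>C a)) y = c * cinner (T a) y" for c a by (simp add: T_scaleC cinner_simps)
  show "cmod (cinner (T x) y) \<le> norm y * norm x" for x
  proof -
    have "cmod (cinner (T x) y) \<le> norm (T x) * norm y" by (rule cauchy_schwarz)
    also have "\<dots> \<le> norm x * norm y" by (intro mult_right_mono contr) simp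
    finally show ?thesis by (simp add: mult.commute)
  qed
qed

lemma adj: "cinner (T x) y = cinner x (adj y)"
proof -
  obtain w where w: "\<forall>x. cinner (T x) y = cinner x w" using adj_exists by blast
  then have "adj y = w" by (intro cadjoint_eq) blast
  then show ?thesis using w by simp
qed

lemma adj_add: "adj (y + z) = adj y + adj z"
  by (intro cadjoint_eq) (simp add: cinner_simps adj[symmetric])

lemma adj_scaleC: "adj (c *\<^sub>C y) = c *\<^sub>C adj y"
  by (intro cadjoint_eq) (simp add: cinner_simps adj[symmetric])

lemma adj_norm: "norm (adj y) \<le> norm y"
proof -
  define w where "w = adj y"
  have "cinner w w = cinner (T w) y" using adj[of w y] by (simp add: w_def)
  then have "(norm w)^2 = Re (cinner (T w) y)" by (metis cinner_self Re_complex_of_real)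
  also have "\<dots> \<le> cmod (cinner (T w) y)" by (rule complex_Re_le_cmod)
  also have "\<dots> \<le> norm (T w) * norm y" by (rule cauchy_schwarz)
  also have "\<dots> \<le> norm w * norm y" by (intro mult_right_mono contr) simp
  finally have le: "(norm w)^2 \<le> norm w * norm y" .
  show ?thesis
  proof (cases "w = 0")
    case True then show ?thesis by (simp add: w_def)
  next
    case False
    then have "norm w > 0" by simp
    with le show ?thesis unfolding w_def[symmetric] by (simp add: power2_eq_square)
  qed
qed

lemma bl_adj: "bounded_linear adj"
  by (rule bounded_linear_intro[where K=1]) (auto simp: adj_add scaleR_scaleC adj_scaleC adj_norm)

abbreviation K where "K \<equiv> KK T"

lemma mem_K: "x \<in> K \<longleftrightarrow> adj (T x) = x" unfolding KK_def by auto

lemma adj_zero [simp]: "adj 0 = 0" by (metis adj_scaleC scaleC_zero_left)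

lemma K_sub: "closed_csubspace K"
proof -
  interpret A: bounded_linear "\<lambda>x. adj (T x)" by (intro bounded_linear_compose[OF bl_adj bl_T])
  have "closed {x. x - adj (T x) = 0}"
    by (intro closed_Collect_eq continuous_intros linear_continuous_on bl_T bl_adj bounded_linear_compose[OF bl_adj bl_T])
  then show ?thesis unfolding closed_csubspace_def KK_def
    by (auto simp: T_add adj_add T_scaleC adj_scaleC scaleC_diff_right[symmetric] A.add algebra_simps)
qed

lemma K0: "0 \<in> K" and K_add: "a \<in> K \<Longrightarrow> b \<in> K \<Longrightarrow> a + b \<in> K"
  and K_sc: "a \<in> K \<Longrightarrow> c *\<^sub>C a \<in> K" and K_closed: "closed K"
  using K_sub by (auto simp: closed_csubspace_def)

lemma K_diff: "a \<in> K \<Longrightarrow> b \<in> K \<Longrightarrow> a - b \<in> K"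
  using closed_csubspace_diff[OF K_sub] .

lemma K_inner: "k \<in> K \<Longrightarrow> cinner (T x) (T k) = cinner x k"
  by (simp add: adj mem_K)

lemma K_inner': "k \<in> K \<Longrightarrow> cinner (T k) (T x) = cinner k x"
  by (metis K_inner cinner_commute)

lemma K_norm: "k \<in> K \<Longrightarrow> norm (T k) = norm k"
proof -
  assume k: "k \<in> K"
  have "cinner (T k) (T k) = cinner k k" using K_inner[OF k, of k] .
  then have "complex_of_real ((norm (T k))^2) = complex_of_real ((norm k)^2)" by (simp only: cinner_self)
  then have "(norm (T k))^2 = (norm k)^2" by (simp only: of_real_eq_iff)
  then show ?thesis by (simp add: power2_eq_iff_nonneg)
qed

lemma T_inj_K: "a \<in> K \<Longrightarrow> b \<in> K \<Longrightarrow> T a = T b \<Longrightarrow> a = b"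
  by (metis K_diff K_norm T_diff eq_iff_diff_eq_0 norm_eq_zero)

definition RP where "RP c = (\<lambda>k. k - c *\<^sub>C T k) ` K"
definition RM where "RM c = (\<lambda>k. T k - c *\<^sub>C k) ` K"

lemma RP_sub: assumes c: "cmod c < 1" shows "closed_csubspace (RP c)"
  unfolding RP_def
proof (rule closed_range[OF K_sub _ _ _, where m = "1 - cmod c"])
  show "bounded_linear (\<lambda>k. k - c *\<^sub>C T k)"
    by (intro bounded_linear_sub bounded_linear_ident bounded_linear_compose[OF bl_scaleC bl_T])
  show "(\<lambda>k. k - c *\<^sub>C T k) (c' *\<^sub>C x) = c' *\<^sub>C (\<lambda>k. k - c *\<^sub>C T k) x" for c' x
    by (simp add: T_scaleC scaleC_scaleC mult.commute scaleC_diff_right)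
  show "0 < 1 - cmod c" using c by simp
  show "(1 - cmod c) * norm k \<le> norm ((\<lambda>k. k - c *\<^sub>C T k) k)" for k
  proof -
    have "norm k - cmod c * norm (T k) \<le> norm (k - c *\<^sub>C T k)"
      using norm_triangle_ineq2[of k "c *\<^sub>C T k"] by (simp add: norm_scaleC)
    moreover have "cmod c * norm (T k) \<le> cmod c * norm k" by (intro mult_left_mono contr) simp
    ultimately show ?thesis by (simp add: algebra_simps)
  qed
qed

lemma RM_sub: assumes c: "cmod c < 1" shows "closed_csubspace (RM c)"
  unfolding RM_def
proof (rule closed_range[OF K_sub _ _ _, where m = "1 - cmod c"])
  show "bounded_linear (\<lambda>k. T k - c *\<^sub>C k)"
    by (intro bounded_linear_sub bl_T bl_scaleC)
  show "(\<lambda>k. T k - c *\<^sub>C k) (c' *\<^sub>C x) = c' *\<^sub>C (\<lambda>k. T k - c *\<^sub>C k) x" for c' x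
    by (simp add: T_scaleC scaleC_scaleC mult.commute scaleC_diff_right)
  show "0 < 1 - cmod c" using c by simp
  show "(1 - cmod c) * norm k \<le> norm ((\<lambda>k. T k - c *\<^sub>C k) k)" if k: "k \<in> K" for k
  proof -
    have "norm (T k) - cmod c * norm k \<le> norm (T k - c *\<^sub>C k)"
      using norm_triangle_ineq2[of "T k" "c *\<^sub>C k"] by (simp add: norm_scaleC)
    then show ?thesis using K_norm[OF k] by (simp add: algebra_simps)
  qed
qed

end

lemma approx_closed:
  fixes y :: "'a::real_normed_vector"
  assumes S: "closed S" and M: "M \<ge> 0"
    and h: "\<And>\<delta>. 0 < \<delta> \<Longrightarrow> \<delta> < 1/2 \<Longrightarrow> \<exists>g\<in>S. norm (g - y) \<le> 2 * \<delta> * M"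
  shows "y \<in> S"
proof -
  have "y \<in> closure S"
    unfolding closure_approachable
  proof (intro allI impI)
    fix e :: real assume e: "e > 0"
    define \<delta> where "\<delta> = min (1/4) (e / (4 * (M + 1)))"
    have d0: "0 < \<delta>" "\<delta> < 1/2" using e M by (auto simp: \<delta>_def)
    obtain g where gS: "g \<in> S" and g: "norm (g - y) \<le> 2 * \<delta> * M" using h[OF d0] by blast
    have "\<delta> \<le> e / (4 * (M + 1))" by (simp add: \<delta>_def)
    then have "\<delta> * (4 * (M + 1)) \<le> e" using M by (simp add: pos_le_divide_eq)
    moreover have "2 * \<delta> * M \<le> \<delta> * (2 * (M + 1))" using d0 by (simp add: algebra_simps)
    moreover have "\<delta> * (2 * (M + 1)) < \<delta> * (4 * (M + 1))" using d0 M by (intro mult_strict_left_mono) auto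
    ultimately have "2 * \<delta> * M < e" by linarith
    then have "dist g y < e" using g by (simp add: dist_norm)
    then show "\<exists>x\<in>S. dist x y < e" using gS by blast
  qed
  then show ?thesis using S by (simp add: closure_closed)
qed

context contr begin

lemma RP_low: "(1 - cmod c) * norm k \<le> norm (k - c *\<^sub>C T k)"
proof -
  have "norm k - cmod c * norm (T k) \<le> norm (k - c *\<^sub>C T k)"
    using norm_triangle_ineq2[of k "c *\<^sub>C T k"] by (simp add: norm_scaleC)
  moreover have "cmod c * norm (T k) \<le> cmod c * norm k" by (intro mult_left_mono contr) simp
  ultimately show ?thesis by (simp add: algebra_simps)
qed

lemma RM_low: "k \<in> K \<Longrightarrow> (1 - cmod c) * norm k \<le> norm (T k - c *\<^sub>C k)"
proof -
  assume k: "k \<in> K"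
  have "norm (T k) - cmod c * norm k \<le> norm (T k - c *\<^sub>C k)"
    using norm_triangle_ineq2[of "T k" "c *\<^sub>C k"] by (simp add: norm_scaleC)
  then show ?thesis using K_norm[OF k] by (simp add: algebra_simps)
qed

lemma mem_RP: "x \<in> RP c \<longleftrightarrow> (\<exists>k\<in>K. x = k - c *\<^sub>C T k)" by (auto simp: RP_def)
lemma mem_RM: "x \<in> RM c \<longleftrightarrow> (\<exists>k\<in>K. x = T k - c *\<^sub>C k)" by (auto simp: RM_def)
lemma RP0: "RP 0 = K" by (auto simp: RP_def)
lemma RM0: "RM 0 = T ` K" by (auto simp: RM_def)

lemma TK_sub: "closed_csubspace (T ` K)" using RM_sub[of 0] by (simp add: RM0)

lemma TK_diff: "a \<in> T ` K \<Longrightarrow> b \<in> T ` K \<Longrightarrow> a - b \<in> T ` K"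
  using closed_csubspace_diff[OF TK_sub] .
lemma TK_sc: "a \<in> T ` K \<Longrightarrow> c *\<^sub>C a \<in> T ` K"
  using TK_sub unfolding closed_csubspace_def by blast
lemma TK_add: "a \<in> T ` K \<Longrightarrow> b \<in> T ` K \<Longrightarrow> a + b \<in> T ` K"
  using TK_sub unfolding closed_csubspace_def by blast

lemma small_c: assumes "0 < \<delta>" "\<delta> < 1/2"
  shows "0 < cmod (complex_of_real \<delta>)" "cmod (complex_of_real \<delta>) < 1" "cmod (complex_of_real \<delta>) = \<delta>"
  using assms by auto

lemma in_TK:
  assumes h: "\<And>c. 0 < cmod c \<Longrightarrow> cmod c < 1 \<Longrightarrow> r \<in> RM c"
  shows "r \<in> T ` K"
proof (rule approx_closed[where M = "norm r"])
  show "closed (T ` K)" using TK_sub by (simp add: closed_csubspace_def)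
  show "norm r \<ge> 0" by simp
  fix \<delta> :: real assume d: "0 < \<delta>" "\<delta> < 1/2"
  define c where "c = complex_of_real \<delta>"
  have c: "0 < cmod c" "cmod c < 1" "cmod c = \<delta>" using small_c[OF d] by (auto simp: c_def)
  obtain g where gK: "g \<in> K" and rg: "r = T g - c *\<^sub>C g" using h[OF c(1,2)] by (auto simp: mem_RM)
  have "(1 - \<delta>) * norm g \<le> norm r" using RM_low[OF gK, of c] by (simp add: rg c)
  moreover have "(1/2) * norm g \<le> (1 - \<delta>) * norm g" using d by (intro mult_right_mono) auto
  ultimately have ng: "norm g \<le> 2 * norm r" by linarith
  have "norm (T g - r) = \<delta> * norm g" by (simp add: rg norm_scaleC c)
  also have "\<dots> \<le> \<delta> * (2 * norm r)" using d ng by (intro mult_left_mono) auto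
  finally have "norm (T g - r) \<le> 2 * \<delta> * norm r" by (simp add: algebra_simps)
  then show "\<exists>g\<in>T ` K. norm (g - r) \<le> 2 * \<delta> * norm r" using gK by blast
qed

lemma in_K_approx:
  assumes h: "\<And>c. 0 < cmod c \<Longrightarrow> cmod c < 1 \<Longrightarrow> y \<in> RP c"
  shows "y \<in> K"
proof (rule approx_closed[where M = "norm y"])
  show "closed K" by (rule K_closed)
  show "norm y \<ge> 0" by simp
  fix \<delta> :: real assume d: "0 < \<delta>" "\<delta> < 1/2"
  define c where "c = complex_of_real \<delta>"
  have c: "0 < cmod c" "cmod c < 1" "cmod c = \<delta>" using small_c[OF d] by (auto simp: c_def)
  obtain f where fK: "f \<in> K" and yf: "y = f - c *\<^sub>C T f" using h[OF c(1,2)] by (auto simp: mem_RP)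
  have "(1 - \<delta>) * norm f \<le> norm y" using RP_low[of c f] by (simp add: yf c)
  moreover have "(1/2) * norm f \<le> (1 - \<delta>) * norm f" using d by (intro mult_right_mono) auto
  ultimately have nf: "norm f \<le> 2 * norm y" by linarith
  have "norm (f - y) = \<delta> * norm (T f)" by (simp add: yf norm_scaleC c)
  also have "\<dots> \<le> \<delta> * norm f" using d by (intro mult_left_mono contr) auto
  also have "\<dots> \<le> \<delta> * (2 * norm y)" using d nf by (intro mult_left_mono) auto
  finally have "norm (f - y) \<le> 2 * \<delta> * norm y" by (simp add: algebra_simps)
  then show "\<exists>g\<in>K. norm (g - y) \<le> 2 * \<delta> * norm y" using fK by blast
qed

definition R where
  "R = {r \<in> K. \<forall>c. 0 < cmod c \<and> cmod c < 1 \<longrightarrow> r \<in> RM c \<and> T r \<in> RP c}"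

lemma R_sub: "closed_csubspace R"
proof -
  have eq: "R = K \<inter> (\<Inter>c\<in>{c. 0 < cmod c \<and> cmod c < 1}. RM c \<inter> T -` RP c)"
    by (auto simp: R_def)
  have cl: "closed R" unfolding eq
  proof (intro closed_Int K_closed closed_INT ballI)
    fix c assume "c \<in> {c. 0 < cmod c \<and> cmod c < 1}"
    then have c: "cmod c < 1" by simp
    show "closed (RM c)" using RM_sub[OF c] by (simp add: closed_csubspace_def)
    show "closed (T -` RP c)"
      using RP_sub[OF c] by (intro closed_vimage linear_continuous_on bl_T) (simp add: closed_csubspace_def)
  qed
  show ?thesis unfolding closed_csubspace_def
  proof (intro conjI ballI allI cl)
    show "0 \<in> R" using RM_sub RP_sub K0 by (auto simp: R_def closed_csubspace_def)
    fix x y assume x: "x \<in> R" and y: "y \<in> R"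
    show "x + y \<in> R" using x y RM_sub RP_sub K_add
      by (auto simp: R_def closed_csubspace_def T_add)
  next
    fix c' x assume x: "x \<in> R"
    show "c' *\<^sub>C x \<in> R" using x RM_sub RP_sub K_sc
      by (auto simp: R_def closed_csubspace_def T_scaleC)
  qed
qed

lemma R_T: assumes r: "r \<in> R" shows "T r \<in> R"
proof -
  have rK: "r \<in> K" and h: "\<And>c. 0 < cmod c \<Longrightarrow> cmod c < 1 \<Longrightarrow> r \<in> RM c \<and> T r \<in> RP c"
    using r by (auto simp: R_def)
  have TrK: "T r \<in> K" by (rule in_K_approx) (use h in blast)
  have "T r \<in> RM c \<and> T (T r) \<in> RP c" if c: "0 < cmod c" "cmod c < 1" for c
  proof
    have c0: "c \<noteq> 0" using c by auto
    obtain g where gK: "g \<in> K" and rg: "r = T g - c *\<^sub>C g" using h[OF c] by (auto simp: mem_RM)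
    have "T g = r + c *\<^sub>C g" by (simp add: rg)
    then have TgK: "T g \<in> K" using rK gK K_add K_sc by simp
    have "T r = T (T g) - c *\<^sub>C T g" by (simp add: rg T_diff T_scaleC)
    then show "T r \<in> RM c" using TgK by (auto simp: mem_RM)
    obtain f where fK: "f \<in> K" and rf: "T r = f - c *\<^sub>C T f" using h[OF c] by (auto simp: mem_RP)
    have "c *\<^sub>C T f = f - T r" by (simp add: rf)
    then have "T f = (1/c) *\<^sub>C (f - T r)" using c0 by (metis scaleC_scaleC scaleC_one nonzero_divide_eq_eq mult.commute divide_self_if times_divide_eq_right)
    then have TfK: "T f \<in> K" using fK TrK K_diff K_sc by simp
    have "T (T r) = T f - c *\<^sub>C T (T f)" by (simp add: rf T_diff T_scaleC)
    then show "T (T r) \<in> RP c" using TfK by (auto simp: mem_RP)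
  qed
  then show ?thesis using TrK by (auto simp: R_def)
qed

lemma inv_c: "c \<noteq> 0 \<Longrightarrow> c *\<^sub>C x = y \<Longrightarrow> x = (1/c) *\<^sub>C y"
  by (metis scaleC_scaleC scaleC_one nonzero_divide_eq_eq mult.commute divide_self_if times_divide_eq_right)

lemma R_TK: "r \<in> R \<Longrightarrow> r \<in> T ` K"
  by (rule in_TK) (auto simp: R_def)

lemma R_adj: assumes r: "r \<in> R" shows "adj r \<in> R" and "T (adj r) = r"
proof -
  have rK: "r \<in> K" and h: "\<And>c. 0 < cmod c \<Longrightarrow> cmod c < 1 \<Longrightarrow> r \<in> RM c \<and> T r \<in> RP c"
    using r by (auto simp: R_def)
  obtain k0 where k0K: "k0 \<in> K" and rk0: "r = T k0" using R_TK[OF r] by blast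
  have ak: "adj r = k0" using k0K by (simp add: rk0 mem_K)
  show "T (adj r) = r" using ak rk0 by metis
  have "k0 \<in> RM c \<and> T k0 \<in> RP c" if c: "0 < cmod c" "cmod c < 1" for c
  proof
    have c0: "c \<noteq> 0" using c by auto
    obtain g where gK: "g \<in> K" and rg: "r = T g - c *\<^sub>C g" using h[OF c] by (auto simp: mem_RM)
    have "c *\<^sub>C g = T g - r" by (simp add: rg)
    then have "g = (1/c) *\<^sub>C (T g - r)" by (rule inv_c[OF c0])
    moreover have "T g - r \<in> T ` K" using gK k0K by (intro TK_diff) (auto simp: rk0)
    ultimately have "g \<in> T ` K" using TK_sc by metis
    then obtain hh where hK: "hh \<in> K" and ghh: "g = T hh" by blast
    have "T k0 = T (g - c *\<^sub>C hh)" by (simp add: rk0[symmetric] rg T_diff T_scaleC ghh)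
    moreover have "g - c *\<^sub>C hh \<in> K" using gK hK K_diff K_sc by simp
    ultimately have "k0 = g - c *\<^sub>C hh" using T_inj_K k0K by blast
    then show "k0 \<in> RM c" using hK by (auto simp: mem_RM ghh)
    obtain f where fK: "f \<in> K" and rf: "T r = f - c *\<^sub>C T f" using h[OF c] by (auto simp: mem_RP)
    have "f = T r + c *\<^sub>C T f" by (simp add: rf)
    moreover have "T r + c *\<^sub>C T f \<in> T ` K" using rK fK by (intro TK_add TK_sc) auto
    ultimately have "f \<in> T ` K" by simp
    then obtain hh where hK: "hh \<in> K" and fhh: "f = T hh" by blast
    have "T r = T (hh - c *\<^sub>C T hh)" by (simp add: rf fhh T_diff T_scaleC)
    moreover have "hh - c *\<^sub>C T hh \<in> K" using hK fK fhh K_diff K_sc by simp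
    ultimately have "r = hh - c *\<^sub>C T hh" using T_inj_K rK by blast
    then show "T k0 \<in> RP c" using hK by (auto simp: mem_RP rk0)
  qed
  then show "adj r \<in> R" using k0K by (auto simp: R_def ak)
qed

lemma R_zero: assumes cnu: "completely_non_unitary T" and r: "r \<in> R" shows "r = 0"
proof (rule ccontr)
  assume "r \<noteq> 0"
  then have "R \<noteq> {0}" using r by blast
  moreover have "T ` R \<subseteq> R" using R_T by blast
  moreover have "adj ` R \<subseteq> R" using R_adj(1) by blast
  moreover have "\<forall>x\<in>R. adj (T x) = x \<and> T (adj x) = x"
    using R_adj(2) by (auto simp: R_def mem_K)
  ultimately show False using cnu R_sub unfolding completely_non_unitary_def by blast
qed

lemma core:
  assumes cnu: "completely_non_unitary T"
    and P1: "\<And>c. cmod c < 1 \<Longrightarrow> p - c *\<^sub>C q \<in> RP c"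
    and P2: "\<And>c. cmod c < 1 \<Longrightarrow> c *\<^sub>C p - q \<in> RM c"
  shows "p \<in> K \<and> q = T p"
proof -
  have pK: "p \<in> K" using P1[of 0] by (simp add: RP0)
  have "- q \<in> T ` K" using P2[of 0] by (simp add: RM0)
  then obtain j0 where j0K: "j0 \<in> K" and qj0: "- q = T j0" by blast
  define j where "j = - j0"
  have jK: "j \<in> K" using j0K K_sc[of j0 "-1"] by (simp add: j_def minus_scaleC)
  have qj: "q = T j" by (simp add: j_def T_minus qj0[symmetric])
  define r where "r = p - j"
  have rK: "r \<in> K" using pK jK by (simp add: r_def K_diff)
  have "r \<in> RM c \<and> T r \<in> RP c" if c: "0 < cmod c" "cmod c < 1" for c
  proof
    have c0: "c \<noteq> 0" using c by auto
    obtain k where kK: "k \<in> K" and pk: "p - c *\<^sub>C q = k - c *\<^sub>C T k" using P1[OF c(2)] by (auto simp: mem_RP)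
    define f where "f = T k - T j"
    have "c *\<^sub>C f = k - p" using pk by (simp add: f_def qj scaleC_diff_right algebra_simps)
    then have ff: "f = (1/c) *\<^sub>C (k - p)" by (rule inv_c[OF c0])
    have fK: "f \<in> K" unfolding ff using kK pK by (intro K_sc K_diff)
    have "c *\<^sub>C T f = T k - T p" by (simp add: T_scaleC[symmetric] \<open>c *\<^sub>C f = k - p\<close> T_diff)
    then have "f - c *\<^sub>C T f = T r" by (simp add: f_def r_def T_diff)
    then show "T r \<in> RP c" using fK unfolding mem_RP by (metis)
    obtain e where eK: "e \<in> K" and pe: "c *\<^sub>C p - q = T e - c *\<^sub>C e" using P2[OF c(2)] by (auto simp: mem_RM)
    define g where "g = (1/c) *\<^sub>C (e + j)"
    have gK: "g \<in> K" unfolding g_def using eK jK by (intro K_sc K_add)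
    have Tej: "T (e + j) = c *\<^sub>C (p + e)"
      using pe by (simp add: T_add qj scaleC_add_right algebra_simps)
    have Tg: "T g = p + e" using c0 by (simp add: g_def T_scaleC Tej scaleC_scaleC)
    have cg: "c *\<^sub>C g = e + j" using c0 by (simp add: g_def scaleC_scaleC)
    have "T g - c *\<^sub>C g = r" by (simp add: Tg cg r_def)
    then show "r \<in> RM c" using gK by (auto simp: mem_RM)
  qed
  then have "r \<in> R" using rK by (auto simp: R_def)
  then have "r = 0" by (rule R_zero[OF cnu])
  then show ?thesis using pK qj by (simp add: r_def)
qed

end

lemma real_bound_aux:
  fixes m a b :: real
  assumes m0: "0 < m" and m1: "m \<le> 1" and h: "m * a^2 \<le> b^2" and a0: "0 \<le> a" and b0: "0 \<le> b"
  shows "a \<le> b / m"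
proof -
  have e1: "(m * a)^2 = m * (m * a^2)" by (simp add: power2_eq_square)
  have e2: "m * (m * a^2) \<le> m * b^2" using h m0 by (simp add: mult_left_mono)
  have e3: "m * b^2 \<le> b^2" using mult_right_mono[OF m1, of "b^2"] by simp
  have "(m * a)^2 \<le> b^2" using e1 e2 e3 by linarith
  then have "m * a \<le> b" using b0 by (rule power2_le_imp_le)
  then have "a * m \<le> b" by (simp only: mult.commute)
  then show ?thesis using pos_le_divide_eq[OF m0] by blast
qed

locale bqsetup = contr T for T :: "'a::{complex_inner,banach} \<Rightarrow> 'a" +
  fixes Gp :: "'a \<times> 'a \<Rightarrow> 'p::{complex_inner,banach}"
    and Gm :: "'a \<times> 'a \<Rightarrow> 'm::{complex_inner,banach}"
    and B :: "complex \<Rightarrow> 'p \<Rightarrow> 'm"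
  assumes bq: "boundary_quadruple T Gp Gm"
    and wf: "contractive_weyl_function T Gp Gm B"
begin

abbreviation D where "D \<equiv> s_orth (A_T T)"

lemma memD: "a \<in> D \<longleftrightarrow> (\<forall>k\<in>K. cinner (fst a) k = cinner (snd a) (T k))"
  by (auto simp: s_orth_def A_T_def kform_def)

lemma D_add: "a \<in> D \<Longrightarrow> b \<in> D \<Longrightarrow> a + b \<in> D"
  by (simp add: memD cinner_simps)

lemma D_sc: "a \<in> D \<Longrightarrow> (c *\<^sub>C fst a, c *\<^sub>C snd a) \<in> D"
  by (simp add: memD cinner_simps)

lemma AT_D: "j \<in> K \<Longrightarrow> (j, T j) \<in> D"
  by (simp add: memD K_inner')

lemma Gp_add: "a \<in> D \<Longrightarrow> b \<in> D \<Longrightarrow> Gp (a + b) = Gp a + Gp b"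
  and Gm_add: "a \<in> D \<Longrightarrow> b \<in> D \<Longrightarrow> Gm (a + b) = Gm a + Gm b"
  and Gp_sc: "a \<in> D \<Longrightarrow> Gp (c *\<^sub>C fst a, c *\<^sub>C snd a) = c *\<^sub>C Gp a"
  and Gm_sc: "a \<in> D \<Longrightarrow> Gm (c *\<^sub>C fst a, c *\<^sub>C snd a) = c *\<^sub>C Gm a"
  and G_surj: "\<exists>a\<in>D. Gp a = yp \<and> Gm a = ym"
  and G_form: "a \<in> D \<Longrightarrow> b \<in> D \<Longrightarrow> kform a b = \<i> * cinner (Gp a) (Gp b) - \<i> * cinner (Gm a) (Gm b)"
proof -
  have h: "(\<forall>a\<in>D. \<forall>b\<in>D. Gp (a + b) = Gp a + Gp b \<and> Gm (a + b) = Gm a + Gm b)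
     \<and> (\<forall>c. \<forall>a\<in>D. Gp (c *\<^sub>C fst a, c *\<^sub>C snd a) = c *\<^sub>C Gp a
                 \<and> Gm (c *\<^sub>C fst a, c *\<^sub>C snd a) = c *\<^sub>C Gm a)
     \<and> (\<exists>K. \<forall>a\<in>D. norm (Gp a, Gm a) \<le> K * norm a)
     \<and> (\<forall>yp ym. \<exists>a\<in>D. Gp a = yp \<and> Gm a = ym)
     \<and> {a\<in>D. Gp a = 0 \<and> Gm a = 0} = A_T T
     \<and> (\<forall>a\<in>D. \<forall>b\<in>D. kform a b = \<i> * cinner (Gp a) (Gp b) - \<i> * cinner (Gm a) (Gm b))"
    using bq unfolding boundary_quadruple_def Let_def .
  note h1 = conjunct1[OF h] and h2 = conjunct1[OF conjunct2[OF h]]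
    and h4 = conjunct1[OF conjunct2[OF conjunct2[OF conjunct2[OF h]]]]
    and h6 = conjunct2[OF conjunct2[OF conjunct2[OF conjunct2[OF conjunct2[OF h]]]]]
  show "a \<in> D \<Longrightarrow> b \<in> D \<Longrightarrow> Gp (a + b) = Gp a + Gp b" using h1 by blast
  show "a \<in> D \<Longrightarrow> b \<in> D \<Longrightarrow> Gm (a + b) = Gm a + Gm b" using h1 by blast
  show "a \<in> D \<Longrightarrow> Gp (c *\<^sub>C fst a, c *\<^sub>C snd a) = c *\<^sub>C Gp a" using h2 by blast
  show "a \<in> D \<Longrightarrow> Gm (c *\<^sub>C fst a, c *\<^sub>C snd a) = c *\<^sub>C Gm a" using h2 by blast
  show "\<exists>a\<in>D. Gp a = yp \<and> Gm a = ym" using h4 by blast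
  show "a \<in> D \<Longrightarrow> b \<in> D \<Longrightarrow> kform a b = \<i> * cinner (Gp a) (Gp b) - \<i> * cinner (Gm a) (Gm b)"
    using h6 by blast
qed

lemma wf_p: "cmod l < 1 \<Longrightarrow> bij_betw Gp (Nl T True l) UNIV"
  and wf_pB: "cmod l < 1 \<Longrightarrow> a \<in> Nl T True l \<Longrightarrow> Gm a = B l (Gp a)"
  and wf_m: "cmod l < 1 \<Longrightarrow> bij_betw Gm (Nl T False l) UNIV"
  and wf_mB: "cmod l < 1 \<Longrightarrow> a \<in> Nl T False l \<Longrightarrow> Gp a = cadjoint (B (cnj l)) (Gm a)"
proof -
  have h: "(\<forall>l. cmod l < 1 \<longrightarrow>
        bij_betw Gp (Nl T True l) UNIV
      \<and> (\<forall>a\<in>Nl T True l. Gm a = B l (Gp a))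
      \<and> (\<exists>c<1. \<forall>x. norm (B l x) \<le> c * norm x))
   \<and> (\<forall>l. cmod l < 1 \<longrightarrow>
        bij_betw Gm (Nl T False l) UNIV
      \<and> (\<forall>a\<in>Nl T False l. Gp a = cadjoint (B (cnj l)) (Gm a)))"
    using wf unfolding contractive_weyl_function_def by simp
  show "cmod l < 1 \<Longrightarrow> bij_betw Gp (Nl T True l) UNIV" using h by blast
  show "cmod l < 1 \<Longrightarrow> a \<in> Nl T True l \<Longrightarrow> Gm a = B l (Gp a)" using h by blast
  show "cmod l < 1 \<Longrightarrow> bij_betw Gm (Nl T False l) UNIV" using h by blast
  show "cmod l < 1 \<Longrightarrow> a \<in> Nl T False l \<Longrightarrow> Gp a = cadjoint (B (cnj l)) (Gm a)" using h by blast
qed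

lemma memNp: "a \<in> Nl T True l \<longleftrightarrow> a \<in> D \<and> snd a = l *\<^sub>C fst a"
  by (cases a) (auto simp: Nl_def)
lemma memNm: "a \<in> Nl T False l \<longleftrightarrow> a \<in> D \<and> fst a = l *\<^sub>C snd a"
  by (cases a) (auto simp: Nl_def)

lemma gm: assumes "cmod l < 1" shows "gamma_m T Gm l z \<in> Nl T False l \<and> Gm (gamma_m T Gm l z) = z"
proof -
  have inj: "inj_on Gm (Nl T False l)" and im: "Gm ` (Nl T False l) = UNIV"
    using wf_m[OF assms] by (auto simp: bij_betw_def)
  have "z \<in> Gm ` (Nl T False l)" using im by simp
  then obtain a where aN: "a \<in> Nl T False l" and az: "Gm a = z" by blast
  have "\<exists>!a. a \<in> Nl T False l \<and> Gm a = z"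
  proof (rule ex1I[of _ a])
    show "a \<in> Nl T False l \<and> Gm a = z" using aN az by simp
    fix b assume "b \<in> Nl T False l \<and> Gm b = z"
    then show "b = a" using inj_onD[OF inj, of b a] aN az by simp
  qed
  then show ?thesis unfolding gamma_m_def by (rule theI')
qed

lemma gm_unique: assumes "cmod l < 1" "a \<in> Nl T False l" shows "gamma_m T Gm l (Gm a) = a"
proof -
  have "inj_on Gm (Nl T False l)" using wf_m[OF assms(1)] by (simp add: bij_betw_def)
  moreover have "gamma_m T Gm l (Gm a) \<in> Nl T False l" "Gm (gamma_m T Gm l (Gm a)) = Gm a"
    using gm[OF assms(1), of "Gm a"] by auto
  ultimately show ?thesis using assms(2) inj_onD by metis
qed

lemma gp: assumes "cmod l < 1" shows "gamma_p T Gp l z \<in> Nl T True l \<and> Gp (gamma_p T Gp l z) = z"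
proof -
  have inj: "inj_on Gp (Nl T True l)" and im: "Gp ` (Nl T True l) = UNIV"
    using wf_p[OF assms] by (auto simp: bij_betw_def)
  have "z \<in> Gp ` (Nl T True l)" using im by simp
  then obtain a where aN: "a \<in> Nl T True l" and az: "Gp a = z" by blast
  have "\<exists>!a. a \<in> Nl T True l \<and> Gp a = z"
  proof (rule ex1I[of _ a])
    show "a \<in> Nl T True l \<and> Gp a = z" using aN az by simp
    fix b assume "b \<in> Nl T True l \<and> Gp b = z"
    then show "b = a" using inj_onD[OF inj, of b a] aN az by simp
  qed
  then show ?thesis unfolding gamma_p_def by (rule theI')
qed

lemma gp_unique: assumes "cmod l < 1" "a \<in> Nl T True l" shows "gamma_p T Gp l (Gp a) = a"
proof -
  have "inj_on Gp (Nl T True l)" using wf_p[OF assms(1)] by (simp add: bij_betw_def)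
  moreover have "gamma_p T Gp l (Gp a) \<in> Nl T True l" "Gp (gamma_p T Gp l (Gp a)) = Gp a"
    using gp[OF assms(1), of "Gp a"] by auto
  ultimately show ?thesis using assms(2) inj_onD by metis
qed

lemma gm_form: "cmod l < 1 \<Longrightarrow> gamma_m T Gm l z = (l *\<^sub>C phi_m T Gm l z, phi_m T Gm l z)"
  using gm[of l z] by (cases "gamma_m T Gm l z") (auto simp: memNm phi_m_def)

lemma gp_form: "cmod l < 1 \<Longrightarrow> gamma_p T Gp l z = (phi_p T Gp l z, l *\<^sub>C phi_p T Gp l z)"
  using gp[of l z] by (cases "gamma_p T Gp l z") (auto simp: memNp phi_p_def)

lemma gm_D: "cmod l < 1 \<Longrightarrow> gamma_m T Gm l z \<in> D" using gm memNm by blast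
lemma gp_D: "cmod l < 1 \<Longrightarrow> gamma_p T Gp l z \<in> D" using gp memNp by blast

lemma adjB: assumes l: "cmod l < 1"
  shows "cinner (B l p) z = cinner p (cadjoint (B l) z)"
proof -
  have l': "cmod (cnj l) < 1" using l by simp
  define a where "a = gamma_p T Gp l p"
  define b where "b = gamma_m T Gm (cnj l) z"
  have aN: "a \<in> Nl T True l" and Gpa: "Gp a = p" using gp[OF l] by (auto simp: a_def)
  have bN: "b \<in> Nl T False (cnj l)" and Gmb: "Gm b = z" using gm[OF l'] by (auto simp: b_def)
  have aD: "a \<in> D" and bD: "b \<in> D" using aN bN by (auto simp: memNp memNm)
  have Gma: "Gm a = B l p" using wf_pB[OF l aN] Gpa by simp
  have Gpb: "Gp b = cadjoint (B l) z" using wf_mB[OF l' bN] Gmb by simp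
  have "kform a b = 0"
    unfolding a_def b_def gp_form[OF l] gm_form[OF l'] kform_def
    by (simp add: cinner_simps)
  then have "\<i> * cinner p (cadjoint (B l) z) - \<i> * cinner (B l p) z = 0"
    using G_form[OF aD bD] by (simp add: Gpa Gma Gpb Gmb)
  then show ?thesis by (simp add: right_diff_distrib[symmetric])
qed

lemma gm_add: assumes l: "cmod l < 1"
  shows "gamma_m T Gm l (z1 + z2) = gamma_m T Gm l z1 + gamma_m T Gm l z2"
proof -
  let ?a = "gamma_m T Gm l z1" and ?b = "gamma_m T Gm l z2"
  have a: "?a \<in> Nl T False l" "Gm ?a = z1" and b: "?b \<in> Nl T False l" "Gm ?b = z2" using gm[OF l] by auto
  have "?a + ?b \<in> Nl T False l" using a(1) b(1)
    by (auto simp: memNm D_add scaleC_add_right)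
  moreover have "Gm (?a + ?b) = z1 + z2" using a b by (simp add: Gm_add memNm)
  ultimately show ?thesis using gm_unique[OF l] by metis
qed

lemma gm_sc: assumes l: "cmod l < 1"
  shows "gamma_m T Gm l (c *\<^sub>C z) = (c *\<^sub>C fst (gamma_m T Gm l z), c *\<^sub>C snd (gamma_m T Gm l z))"
proof -
  let ?a = "gamma_m T Gm l z"
  have a: "?a \<in> Nl T False l" "Gm ?a = z" using gm[OF l] by auto
  have Dm: "(c *\<^sub>C fst ?a, c *\<^sub>C snd ?a) \<in> D" using D_sc a(1) memNm by blast
  have eq: "c *\<^sub>C fst ?a = l *\<^sub>C (c *\<^sub>C snd ?a)" using a(1) by (simp add: memNm scaleC_scaleC mult.commute)
  have "(c *\<^sub>C fst ?a, c *\<^sub>C snd ?a) \<in> Nl T False l" using Dm eq by (simp add: memNm)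
  moreover have "Gm (c *\<^sub>C fst ?a, c *\<^sub>C snd ?a) = c *\<^sub>C z" using a Gm_sc[of ?a c] memNm by metis
  ultimately show ?thesis using gm_unique[OF l] by metis
qed

lemma gp_add: assumes l: "cmod l < 1"
  shows "gamma_p T Gp l (z1 + z2) = gamma_p T Gp l z1 + gamma_p T Gp l z2"
proof -
  let ?a = "gamma_p T Gp l z1" and ?b = "gamma_p T Gp l z2"
  have a: "?a \<in> Nl T True l" "Gp ?a = z1" and b: "?b \<in> Nl T True l" "Gp ?b = z2" using gp[OF l] by auto
  have "?a + ?b \<in> Nl T True l" using a(1) b(1)
    by (auto simp: memNp D_add scaleC_add_right)
  moreover have "Gp (?a + ?b) = z1 + z2" using a b by (simp add: Gp_add memNp)
  ultimately show ?thesis using gp_unique[OF l] by metis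
qed

lemma gp_sc: assumes l: "cmod l < 1"
  shows "gamma_p T Gp l (c *\<^sub>C z) = (c *\<^sub>C fst (gamma_p T Gp l z), c *\<^sub>C snd (gamma_p T Gp l z))"
proof -
  let ?a = "gamma_p T Gp l z"
  have a: "?a \<in> Nl T True l" "Gp ?a = z" using gp[OF l] by auto
  have Dm: "(c *\<^sub>C fst ?a, c *\<^sub>C snd ?a) \<in> D" using D_sc a(1) memNp by blast
  have eq: "c *\<^sub>C snd ?a = l *\<^sub>C (c *\<^sub>C fst ?a)" using a(1) by (simp add: memNp scaleC_scaleC mult.commute)
  have "(c *\<^sub>C fst ?a, c *\<^sub>C snd ?a) \<in> Nl T True l" using Dm eq by (simp add: memNp)
  moreover have "Gp (c *\<^sub>C fst ?a, c *\<^sub>C snd ?a) = c *\<^sub>C z" using a Gp_sc[of ?a c] memNp by metis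
  ultimately show ?thesis using gp_unique[OF l] by metis
qed

lemma phim_add: "cmod l < 1 \<Longrightarrow> phi_m T Gm l (z1 + z2) = phi_m T Gm l z1 + phi_m T Gm l z2"
  by (simp add: phi_m_def gm_add)
lemma phim_sc: "cmod l < 1 \<Longrightarrow> phi_m T Gm l (c *\<^sub>C z) = c *\<^sub>C phi_m T Gm l z"
  by (simp add: phi_m_def gm_sc)
lemma phip_add: "cmod l < 1 \<Longrightarrow> phi_p T Gp l (z1 + z2) = phi_p T Gp l z1 + phi_p T Gp l z2"
  by (simp add: phi_p_def gp_add)
lemma phip_sc: "cmod l < 1 \<Longrightarrow> phi_p T Gp l (c *\<^sub>C z) = c *\<^sub>C phi_p T Gp l z"
  by (simp add: phi_p_def gp_sc)

lemma phim_bound: assumes l: "cmod l < 1"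
  shows "norm (phi_m T Gm l z) \<le> norm z / (1 - (cmod l)^2)"
proof -
  define u where "u = phi_m T Gm l z"
  define b where "b = gamma_m T Gm l z"
  have bD: "b \<in> D" and Gmb: "Gm b = z" using gm[OF l] memNm by (auto simp: b_def)
  have bf: "b = (l *\<^sub>C u, u)" by (simp add: b_def u_def gm_form[OF l])
  have "kform b b = \<i> * cinner (Gp b) (Gp b) - \<i> * cinner z z" using G_form[OF bD bD] Gmb by simp
  moreover have "kform b b = \<i> * cinner (l *\<^sub>C u) (l *\<^sub>C u) - \<i> * cinner u u" by (simp add: bf kform_def)
  ultimately have "\<i> * (cinner (l *\<^sub>C u) (l *\<^sub>C u) - cinner u u) = \<i> * (cinner (Gp b) (Gp b) - cinner z z)"
    by (simp add: right_diff_distrib)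
  then have "cinner (l *\<^sub>C u) (l *\<^sub>C u) - cinner u u = cinner (Gp b) (Gp b) - cinner z z" by simp
  then have "complex_of_real ((norm (l *\<^sub>C u))^2 - (norm u)^2) = complex_of_real ((norm (Gp b))^2 - (norm z)^2)"
    by (simp add: cinner_self)
  then have "(norm (l *\<^sub>C u))^2 - (norm u)^2 = (norm (Gp b))^2 - (norm z)^2" by (simp only: of_real_eq_iff)
  then have eq: "(1 - (cmod l)^2) * (norm u)^2 = (norm z)^2 - (norm (Gp b))^2"
    by (simp add: norm_scaleC power_mult_distrib algebra_simps)
  have "(1 - (cmod l)^2) * (norm u)^2 \<le> (norm z)^2" using eq by simp
  moreover have "0 < 1 - (cmod l)^2" using l by (simp add: abs_square_less_1)
  moreover have "1 - (cmod l)^2 \<le> 1" by simp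
  ultimately show ?thesis unfolding u_def[symmetric] by (intro real_bound_aux) auto
qed

lemma phip_bound: assumes l: "cmod l < 1"
  shows "norm (phi_p T Gp l z) \<le> norm z / (1 - (cmod l)^2)"
proof -
  define u where "u = phi_p T Gp l z"
  define b where "b = gamma_p T Gp l z"
  have bD: "b \<in> D" and Gpb: "Gp b = z" using gp[OF l] memNp by (auto simp: b_def)
  have bf: "b = (u, l *\<^sub>C u)" by (simp add: b_def u_def gp_form[OF l])
  have "kform b b = \<i> * cinner z z - \<i> * cinner (Gm b) (Gm b)" using G_form[OF bD bD] Gpb by simp
  moreover have "kform b b = \<i> * cinner u u - \<i> * cinner (l *\<^sub>C u) (l *\<^sub>C u)" by (simp add: bf kform_def)
  ultimately have "\<i> * (cinner u u - cinner (l *\<^sub>C u) (l *\<^sub>C u)) = \<i> * (cinner z z - cinner (Gm b) (Gm b))"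
    by (simp add: right_diff_distrib)
  then have "cinner u u - cinner (l *\<^sub>C u) (l *\<^sub>C u) = cinner z z - cinner (Gm b) (Gm b)" by simp
  then have "complex_of_real ((norm u)^2 - (norm (l *\<^sub>C u))^2) = complex_of_real ((norm z)^2 - (norm (Gm b))^2)"
    by (simp add: cinner_self)
  then have "(norm u)^2 - (norm (l *\<^sub>C u))^2 = (norm z)^2 - (norm (Gm b))^2" by (simp only: of_real_eq_iff)
  then have eq: "(1 - (cmod l)^2) * (norm u)^2 = (norm z)^2 - (norm (Gm b))^2"
    by (simp add: norm_scaleC power_mult_distrib algebra_simps)
  have "(1 - (cmod l)^2) * (norm u)^2 \<le> (norm z)^2" using eq by simp
  moreover have "0 < 1 - (cmod l)^2" using l by (simp add: abs_square_less_1)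
  moreover have "1 - (cmod l)^2 \<le> 1" by simp
  ultimately show ?thesis unfolding u_def[symmetric] by (intro real_bound_aux) auto
qed

lemma fplus_char: assumes l: "cmod l < 1"
  shows "cinner (f_plus T Gm (hat T x) l) z = cinner x (phi_m T Gm (cnj l) z)"
proof -
  have l': "cmod (cnj l) < 1" using l by simp
  define m where "m = 1 - (cmod (cnj l))^2"
  have "\<exists>w. \<forall>z. cinner (phi_m T Gm (cnj l) z) x = cinner z w"
  proof (rule riesz[where K = "norm x / m"])
    show "cinner (phi_m T Gm (cnj l) (a + b)) x = cinner (phi_m T Gm (cnj l) a) x + cinner (phi_m T Gm (cnj l) b) x" for a b
      by (simp add: phim_add[OF l'] cinner_simps)
    show "cinner (phi_m T Gm (cnj l) (c *\<^sub>C a)) x = c * cinner (phi_m T Gm (cnj l) a) x" for c a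
      by (simp add: phim_sc[OF l'] cinner_simps)
    show "cmod (cinner (phi_m T Gm (cnj l) a) x) \<le> norm x / m * norm a" for a
    proof -
      have "cmod (cinner (phi_m T Gm (cnj l) a) x) \<le> norm (phi_m T Gm (cnj l) a) * norm x" by (rule cauchy_schwarz)
      also have "\<dots> \<le> (norm a / m) * norm x" unfolding m_def by (intro mult_right_mono phim_bound[OF l']) auto
      also have "(norm a / m) * norm x = norm x / m * norm a" by (simp add: field_simps)
      finally show ?thesis .
    qed
  qed
  then obtain w where w: "\<And>z. cinner (phi_m T Gm (cnj l) z) x = cinner z w" by blast
  have w': "cinner w z = cinner x (phi_m T Gm (cnj l) z)" for z
    by (metis w cinner_commute)
  have hv: "hat T x True l (phi_m T Gm (cnj l) z) = cinner x (phi_m T Gm (cnj l) z)" for z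
  proof -
    have "phi_m T Gm (cnj l) z \<in> El T False (cnj l)"
      using gm[OF l'] by (auto simp: El_def phi_m_def)
    then show ?thesis using l by (simp add: hat_def)
  qed
  have "f_plus T Gm (hat T x) l = w"
    unfolding f_plus_def
  proof (rule the_equality)
    show "\<forall>z. cinner w z = hat T x True l (phi_m T Gm (cnj l) z)" by (simp add: hv w')
    fix w2 assume "\<forall>z. cinner w2 z = hat T x True l (phi_m T Gm (cnj l) z)"
    then show "w2 = w" by (intro cinner_ext_left) (simp add: hv w')
  qed
  then show ?thesis by (simp add: w')
qed

lemma fminus_char: assumes l: "cmod l < 1"
  shows "cinner (f_minus T Gp (hat T x) l) z = cinner x (phi_p T Gp (cnj l) z)"
proof -
  have l': "cmod (cnj l) < 1" using l by simp
  define m where "m = 1 - (cmod (cnj l))^2"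
  have "\<exists>w. \<forall>z. cinner (phi_p T Gp (cnj l) z) x = cinner z w"
  proof (rule riesz[where K = "norm x / m"])
    show "cinner (phi_p T Gp (cnj l) (a + b)) x = cinner (phi_p T Gp (cnj l) a) x + cinner (phi_p T Gp (cnj l) b) x" for a b
      by (simp add: phip_add[OF l'] cinner_simps)
    show "cinner (phi_p T Gp (cnj l) (c *\<^sub>C a)) x = c * cinner (phi_p T Gp (cnj l) a) x" for c a
      by (simp add: phip_sc[OF l'] cinner_simps)
    show "cmod (cinner (phi_p T Gp (cnj l) a) x) \<le> norm x / m * norm a" for a
    proof -
      have "cmod (cinner (phi_p T Gp (cnj l) a) x) \<le> norm (phi_p T Gp (cnj l) a) * norm x" by (rule cauchy_schwarz)
      also have "\<dots> \<le> (norm a / m) * norm x" unfolding m_def by (intro mult_right_mono phip_bound[OF l']) auto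
      also have "(norm a / m) * norm x = norm x / m * norm a" by (simp add: field_simps)
      finally show ?thesis .
    qed
  qed
  then obtain w where w: "\<And>z. cinner (phi_p T Gp (cnj l) z) x = cinner z w" by blast
  have w': "cinner w z = cinner x (phi_p T Gp (cnj l) z)" for z
    by (metis w cinner_commute)
  have hv: "hat T x False l (phi_p T Gp (cnj l) z) = cinner x (phi_p T Gp (cnj l) z)" for z
  proof -
    have "phi_p T Gp (cnj l) z \<in> El T True (cnj l)"
      using gp[OF l'] by (auto simp: El_def phi_p_def)
    then show ?thesis using l by (simp add: hat_def)
  qed
  have "f_minus T Gp (hat T x) l = w"
    unfolding f_minus_def
  proof (rule the_equality)
    show "\<forall>z. cinner w z = hat T x False l (phi_p T Gp (cnj l) z)" by (simp add: hv w')
    fix w2 assume "\<forall>z. cinner w2 z = hat T x False l (phi_p T Gp (cnj l) z)"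
    then show "w2 = w" by (intro cinner_ext_left) (simp add: hv w')
  qed
  then show ?thesis by (simp add: w')
qed

lemma fwd1: assumes aD: "a \<in> D" and l: "cmod l < 1"
  shows "l *\<^sub>C f_plus T Gm (hat T (fst a)) l - f_plus T Gm (hat T (snd a)) l = B l (Gp a) - Gm a"
proof (rule cinner_ext_left)
  fix z
  have l': "cmod (cnj l) < 1" using l by simp
  define u where "u = phi_m T Gm (cnj l) z"
  define b where "b = gamma_m T Gm (cnj l) z"
  have bN: "b \<in> Nl T False (cnj l)" and Gmb: "Gm b = z" using gm[OF l'] by (auto simp: b_def)
  have bD: "b \<in> D" using bN by (simp add: memNm)
  have bf: "b = (cnj l *\<^sub>C u, u)" by (simp add: b_def u_def gm_form[OF l'])
  have Gpb: "Gp b = cadjoint (B l) z" using wf_mB[OF l' bN] Gmb by simp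
  have "kform a b = \<i> * (l * cinner (fst a) u - cinner (snd a) u)"
    by (simp add: bf kform_def cinner_simps right_diff_distrib)
  moreover have "kform a b = \<i> * (cinner (B l (Gp a)) z - cinner (Gm a) z)"
    using G_form[OF aD bD] by (simp add: Gpb Gmb adjB[OF l] right_diff_distrib)
  ultimately have "l * cinner (fst a) u - cinner (snd a) u = cinner (B l (Gp a)) z - cinner (Gm a) z"
    by simp
  then show "cinner (l *\<^sub>C f_plus T Gm (hat T (fst a)) l - f_plus T Gm (hat T (snd a)) l) z
      = cinner (B l (Gp a) - Gm a) z"
    by (simp add: cinner_simps fplus_char[OF l] u_def)
qed

lemma fwd2: assumes aD: "a \<in> D" and l: "cmod l < 1"
  shows "f_minus T Gp (hat T (fst a)) l - l *\<^sub>C f_minus T Gp (hat T (snd a)) l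
     = Gp a - cadjoint (B (cnj l)) (Gm a)"
proof (rule cinner_ext_left)
  fix z
  have l': "cmod (cnj l) < 1" using l by simp
  define v where "v = phi_p T Gp (cnj l) z"
  define b where "b = gamma_p T Gp (cnj l) z"
  have bN: "b \<in> Nl T True (cnj l)" and Gpb: "Gp b = z" using gp[OF l'] by (auto simp: b_def)
  have bD: "b \<in> D" using bN by (simp add: memNp)
  have bf: "b = (v, cnj l *\<^sub>C v)" by (simp add: b_def v_def gp_form[OF l'])
  have Gmb: "Gm b = B (cnj l) z" using wf_pB[OF l' bN] Gpb by simp
  have adj2: "cinner (Gm a) (B (cnj l) z) = cinner (cadjoint (B (cnj l)) (Gm a)) z"
    by (metis adjB[OF l'] cinner_commute)
  have "kform a b = \<i> * (cinner (fst a) v - l * cinner (snd a) v)"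
    by (simp add: bf kform_def cinner_simps right_diff_distrib)
  moreover have "kform a b = \<i> * (cinner (Gp a) z - cinner (cadjoint (B (cnj l)) (Gm a)) z)"
    using G_form[OF aD bD] by (simp add: Gpb Gmb adj2 right_diff_distrib)
  ultimately have "cinner (fst a) v - l * cinner (snd a) v = cinner (Gp a) z - cinner (cadjoint (B (cnj l)) (Gm a)) z"
    by simp
  then show "cinner (f_minus T Gp (hat T (fst a)) l - l *\<^sub>C f_minus T Gp (hat T (snd a)) l) z
      = cinner (Gp a - cadjoint (B (cnj l)) (Gm a)) z"
    by (simp add: cinner_simps fminus_char[OF l] v_def)
qed

lemma conv:
  assumes cnu: "completely_non_unitary T"
    and h1: "\<forall>l. cmod l < 1 \<longrightarrow> l *\<^sub>C f_plus T Gm (hat T x) l - f_plus T Gm (hat T y) l = B l xp - xm"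
    and h2: "\<forall>l. cmod l < 1 \<longrightarrow> f_minus T Gp (hat T x) l - l *\<^sub>C f_minus T Gp (hat T y) l = xp - cadjoint (B (cnj l)) xm"
  shows "(x, y) \<in> D"
proof -
  obtain a where aD: "a \<in> D" and Gpa: "Gp a = xp" and Gma: "Gm a = xm" using G_surj by blast
  define p where "p = x - fst a"
  define q where "q = y - snd a"
  have Q1: "l * cinner p (phi_m T Gm (cnj l) z) - cinner q (phi_m T Gm (cnj l) z) = 0"
    if l: "cmod l < 1" for l z
  proof -
    have "l *\<^sub>C f_plus T Gm (hat T x) l - f_plus T Gm (hat T y) l
        = l *\<^sub>C f_plus T Gm (hat T (fst a)) l - f_plus T Gm (hat T (snd a)) l"
      using h1 l fwd1[OF aD l] by (simp add: Gpa Gma)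
    then have "cinner (l *\<^sub>C f_plus T Gm (hat T x) l - f_plus T Gm (hat T y) l) z
        = cinner (l *\<^sub>C f_plus T Gm (hat T (fst a)) l - f_plus T Gm (hat T (snd a)) l) z" by simp
    then show ?thesis by (simp add: cinner_simps fplus_char[OF l] p_def q_def algebra_simps)
  qed
  have Q2: "cinner p (phi_p T Gp (cnj l) z) - l * cinner q (phi_p T Gp (cnj l) z) = 0"
    if l: "cmod l < 1" for l z
  proof -
    have "f_minus T Gp (hat T x) l - l *\<^sub>C f_minus T Gp (hat T y) l
        = f_minus T Gp (hat T (fst a)) l - l *\<^sub>C f_minus T Gp (hat T (snd a)) l"
      using h2 l fwd2[OF aD l] by (simp add: Gpa Gma)
    then have "cinner (f_minus T Gp (hat T x) l - l *\<^sub>C f_minus T Gp (hat T y) l) z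
        = cinner (f_minus T Gp (hat T (fst a)) l - l *\<^sub>C f_minus T Gp (hat T (snd a)) l) z" by simp
    then show ?thesis by (simp add: cinner_simps fminus_char[OF l] p_def q_def algebra_simps)
  qed
  have P2: "c *\<^sub>C p - q \<in> RM c" if c: "cmod c < 1" for c
  proof (rule perp_perp[OF RM_sub[OF c]])
    fix u assume ou: "\<And>w. w \<in> RM c \<Longrightarrow> cinner u w = 0"
    have c': "cmod (cnj c) < 1" using c by simp
    have "cinner (cnj c *\<^sub>C u) k = cinner u (T k)" if kK: "k \<in> K" for k
    proof -
      have "cinner u (T k - c *\<^sub>C k) = 0" using kK by (intro ou) (auto simp: mem_RM)
      then show ?thesis by (simp add: cinner_simps)
    qed
    then have "(cnj c *\<^sub>C u, u) \<in> D" by (simp add: memD)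
    then have bN: "(cnj c *\<^sub>C u, u) \<in> Nl T False (cnj c)" by (simp add: memNm)
    have "phi_m T Gm (cnj c) (Gm (cnj c *\<^sub>C u, u)) = u"
      using gm_unique[OF c' bN] by (simp add: phi_m_def)
    then have "c * cinner p u - cinner q u = 0" using Q1[OF c, of "Gm (cnj c *\<^sub>C u, u)"] by simp
    then show "cinner (c *\<^sub>C p - q) u = 0" by (simp add: cinner_simps)
  qed
  have P1: "p - c *\<^sub>C q \<in> RP c" if c: "cmod c < 1" for c
  proof (rule perp_perp[OF RP_sub[OF c]])
    fix v assume ov: "\<And>w. w \<in> RP c \<Longrightarrow> cinner v w = 0"
    have c': "cmod (cnj c) < 1" using c by simp
    have "cinner v k = cinner (cnj c *\<^sub>C v) (T k)" if kK: "k \<in> K" for k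
    proof -
      have "cinner v (k - c *\<^sub>C T k) = 0" using kK by (intro ov) (auto simp: mem_RP)
      then show ?thesis by (simp add: cinner_simps)
    qed
    then have "(v, cnj c *\<^sub>C v) \<in> D" by (simp add: memD)
    then have bN: "(v, cnj c *\<^sub>C v) \<in> Nl T True (cnj c)" by (simp add: memNp)
    have "phi_p T Gp (cnj c) (Gp (v, cnj c *\<^sub>C v)) = v"
      using gp_unique[OF c' bN] by (simp add: phi_p_def)
    then have "cinner p v - c * cinner q v = 0" using Q2[OF c, of "Gp (v, cnj c *\<^sub>C v)"] by simp
    then show "cinner (p - c *\<^sub>C q) v = 0" by (simp add: cinner_simps)
  qed
  have "p \<in> K \<and> q = T p" using core[OF cnu P1 P2] .
  then have "(p, q) \<in> D" using AT_D by simp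
  then have "a + (p, q) \<in> D" using aD by (rule D_add[rotated])
  moreover have "a + (p, q) = (x, y)" by (cases a) (simp add: p_def q_def)
  ultimately show ?thesis by simp
qed

end

theorem proposition4p15:
  fixes T :: "'a::{complex_inner,banach} \<Rightarrow> 'a"
    and Gp :: "'a \<times> 'a \<Rightarrow> 'p::{complex_inner,banach}"
    and Gm :: "'a \<times> 'a \<Rightarrow> 'm::{complex_inner,banach}"
    and B :: "complex \<Rightarrow> 'p \<Rightarrow> 'm"
    and s t :: "bool \<Rightarrow> complex \<Rightarrow> 'a \<Rightarrow> complex"
  assumes "separable_H TYPE('a)"
    and "infinite_dimensional TYPE('a)"
    and "bounded_clinear T"
    and "\<forall>x. norm (T x) \<le> norm x"
    and "completely_non_unitary T"
    and "boundary_quadruple T Gp Gm"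
    and "contractive_weyl_function T Gp Gm B"
    and "s \<in> frakH T" and "t \<in> frakH T"
  shows "(s, t) \<in> hat_rel T (s_orth (A_T T)) \<longleftrightarrow>
    (\<exists>xp xm.
       (\<forall>l. norm l < 1 \<longrightarrow> l *\<^sub>C f_plus T Gm s l - f_plus T Gm t l = B l xp - xm)
     \<and> (\<forall>l. norm l < 1 \<longrightarrow> f_minus T Gp s l - l *\<^sub>C f_minus T Gp t l = xp - cadjoint (B (cnj l)) xm))"
proof -
  interpret bqsetup T Gp Gm B
  proof (unfold_locales)
    show "clinear T" using assms(3) by (simp add: bounded_clinear_def)
    show "norm (T x) \<le> norm x" for x using assms(4) by blast
    show "boundary_quadruple T Gp Gm" by (rule assms(6))
    show "contractive_weyl_function T Gp Gm B" by (rule assms(7))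
  qed
  show ?thesis
  proof
    assume "(s, t) \<in> hat_rel T (s_orth (A_T T))"
    then obtain x y where st: "s = hat T x" "t = hat T y" and xy: "(x, y) \<in> D"
      by (auto simp: hat_rel_def)
    show "\<exists>xp xm.
       (\<forall>l. norm l < 1 \<longrightarrow> l *\<^sub>C f_plus T Gm s l - f_plus T Gm t l = B l xp - xm)
     \<and> (\<forall>l. norm l < 1 \<longrightarrow> f_minus T Gp s l - l *\<^sub>C f_minus T Gp t l = xp - cadjoint (B (cnj l)) xm)"
      using fwd1[OF xy] fwd2[OF xy] by (intro exI[of _ "Gp (x, y)"] exI[of _ "Gm (x, y)"]) (simp add: st)
  next
    assume "\<exists>xp xm.
       (\<forall>l. norm l < 1 \<longrightarrow> l *\<^sub>C f_plus T Gm s l - f_plus T Gm t l = B l xp - xm)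
     \<and> (\<forall>l. norm l < 1 \<longrightarrow> f_minus T Gp s l - l *\<^sub>C f_minus T Gp t l = xp - cadjoint (B (cnj l)) xm)"
    then obtain xp xm where
      h1: "\<forall>l. norm l < 1 \<longrightarrow> l *\<^sub>C f_plus T Gm s l - f_plus T Gm t l = B l xp - xm" and
      h2: "\<forall>l. norm l < 1 \<longrightarrow> f_minus T Gp s l - l *\<^sub>C f_minus T Gp t l = xp - cadjoint (B (cnj l)) xm"
      by blast
    obtain x where sx: "s = hat T x" using assms(8) by (auto simp: frakH_def)
    obtain y where ty: "t = hat T y" using assms(9) by (auto simp: frakH_def)
    have "(x, y) \<in> D" using conv[OF assms(5)] h1 h2 by (simp add: sx ty)
    then show "(s, t) \<in> hat_rel T (s_orth (A_T T))" by (auto simp: hat_rel_def sx ty)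
  qed
qed

end
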